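(* Let $n\ge2$. Every $f\in\mathcal{E}$ admits a smooth extension $\widetilde f$ to $\mathbb{C}^{n+1}\setminus\{0\}$, homogeneous of degree $(0,0)$, with $\widetilde f|_{\mathcal{N}}=f$ and $\Delta\widetilde f=O(L^{n-1})$. Such an $\widetilde f$ is unique modulo $O(L^n)$: if $\widetilde f,\widetilde f'$ are two such extensions then $\widetilde f-\widetilde f'=O(L^n)$.
   Context: On $\mathbb{C}^{n+1}$ with coordinates $\zeta=(\zeta_0,\dots,\zeta_n)$ put $L(\zeta)=|\zeta_0|^2-\sum_{j=1}^n|\zeta_j|^2$, $\mathcal{N}=\{\zeta\ne0:L(\zeta)=0\}$, $\Delta=\partial_{\zeta_0}\partial_{\bar\zeta_0}-\sum_{j=1}^n\partial_{\zeta_j}\partial_{\bar\zeta_j}$. Homogeneous of degree $(p,q)$ means $\widetilde f(\lambda\zeta)=\lambda^p\bar\lambda^q\widetilde f(\zeta)$ for $\lambda\in\mathbb{C}^*$. $\mathcal{E}=\{f\in C^\infty(\mathcal{N},\mathbb{R}):f(\lambda\zeta)=f(\zeta)\ \forall\lambda\in\mathbb{C}^*\}$. For a function $u$ on $\mathbb{C}^{n+1}\setminus\{0\}$, $u=O(L^k)$ means $u=L^kh$ for some smooth $h$ on $\mathbb{C}^{n+1}\setminus\{0\}$. *)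

theory Defs
  imports "HOL-Analysis.Analysis"
begin

text \<open>Points of C^(n+1) are pairs (zeta_0, (zeta_1,...,zeta_n)) with n = CARD('n).\<close>
type_synonym 'n pt = "complex \<times> (complex ^ 'n)"

definition Lform :: "'n::finite pt \<Rightarrow> real" where
  "Lform z = (cmod (fst z))^2 - (\<Sum>j\<in>UNIV. (cmod (snd z $ j))^2)"

definition nullcone :: "'n::finite pt set" where
  "nullcone = {z. z \<noteq> 0 \<and> Lform z = 0}"

definition cscale :: "complex \<Rightarrow> 'n::finite pt \<Rightarrow> 'n pt" where
  "cscale c z = (c * fst z, \<chi> j. c * (snd z $ j))"

text \<open>Iterated directional (Frechet) derivatives; last element of the list is applied first.\<close>
fun dirderivs :: "'a::real_normed_vector list \<Rightarrow> ('a \<Rightarrow> 'b::real_normed_vector) \<Rightarrow> 'a \<Rightarrow> 'b" where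
  "dirderivs [] u = u"
| "dirderivs (v # vs) u = (\<lambda>x. frechet_derivative (dirderivs vs u) (at x) v)"

definition smooth_on :: "'a::real_normed_vector set \<Rightarrow> ('a \<Rightarrow> 'b::real_normed_vector) \<Rightarrow> bool" where
  "smooth_on S u \<longleftrightarrow> open S \<and> (\<forall>vs. dirderivs vs u differentiable_on S)"

definition smooth_on_subset :: "'a::real_normed_vector set \<Rightarrow> ('a \<Rightarrow> 'b::real_normed_vector) \<Rightarrow> bool" where
  "smooth_on_subset N u \<longleftrightarrow>
     (\<forall>x\<in>N. \<exists>U g. open U \<and> x \<in> U \<and> smooth_on U g \<and> (\<forall>y\<in>U \<inter> N. g y = u y))"

text \<open>The space E: smooth real functions on N, invariant under C^* scaling
  (values off N are irrelevant).\<close>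
definition Espace :: "('n::finite pt \<Rightarrow> real) set" where
  "Espace = {f. smooth_on_subset nullcone f \<and>
      (\<forall>z\<in>nullcone. \<forall>c. c \<noteq> 0 \<longrightarrow> f (cscale c z) = f z)}"

definition homog00 :: "('n::finite pt \<Rightarrow> real) \<Rightarrow> bool" where
  "homog00 u \<longleftrightarrow> (\<forall>z. z \<noteq> 0 \<longrightarrow> (\<forall>c. c \<noteq> 0 \<longrightarrow> u (cscale c z) = u z))"

definition d2 :: "'a::real_normed_vector \<Rightarrow> ('a \<Rightarrow> real) \<Rightarrow> 'a \<Rightarrow> real" where
  "d2 v u = dirderivs [v, v] u"

text \<open>Delta = d_{z0} d_{bar z0} - sum_j d_{zj} d_{bar zj}; each d_z d_{bar z} = (1/4)(d_x^2 + d_y^2).\<close>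
definition Delta :: "('n::finite pt \<Rightarrow> real) \<Rightarrow> 'n pt \<Rightarrow> real" where
  "Delta u x = (1/4) * ((d2 (1, 0) u x + d2 (\<i>, 0) u x)
     - (\<Sum>j\<in>UNIV. d2 (0, axis j 1) u x + d2 (0, axis j \<i>) u x))"

definition bigOL :: "nat \<Rightarrow> ('n::finite pt \<Rightarrow> real) \<Rightarrow> bool" where
  "bigOL k u \<longleftrightarrow> (\<exists>h. smooth_on (- {0}) h \<and> (\<forall>z. z \<noteq> 0 \<longrightarrow> u z = (Lform z)^k * h z))"

definition good_ext :: "('n::finite pt \<Rightarrow> real) \<Rightarrow> ('n pt \<Rightarrow> real) \<Rightarrow> bool" where
  "good_ext f F \<longleftrightarrow> smooth_on (- {0}) F \<and> homog00 F \<and> (\<forall>z\<in>nullcone. F z = f z)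
     \<and> bigOL (CARD('n) - 1) (Delta F)"

end

theory Submission
  imports Defs "HOL-Computational_Algebra.Polynomial"
begin

lemma fd_cong:
  assumes "open S" "x \<in> S" "\<And>y. y \<in> S \<Longrightarrow> f y = g y"
  shows "frechet_derivative f (at x) = frechet_derivative g (at x)"
proof -
  have "\<And>f'. (f has_derivative f') (at x) \<longleftrightarrow> (g has_derivative f') (at x)"
    using assms has_derivative_transform_within_open by (metis)
  then show ?thesis unfolding frechet_derivative_def by simp
qed

lemma dirderivs_cong:
  assumes "open S" "\<And>y. y \<in> S \<Longrightarrow> f y = g y" "x \<in> S"
  shows "dirderivs vs f x = dirderivs vs g x"
  using assms(3)
proof (induction vs arbitrary: x)
  case Nil
  then show ?case using assms by simp
next
  case (Cons v vs)
  have "frechet_derivative (dirderivs vs f) (at x) = frechet_derivative (dirderivs vs g) (at x)"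
    by (rule fd_cong[OF assms(1) Cons.prems]) (use Cons.IH in auto)
  then show ?case by simp
qed

lemma dirderivs_snoc:
  "dirderivs (vs @ [w]) u = dirderivs vs (\<lambda>x. frechet_derivative u (at x) w)"
  by (induction vs) auto

lemma differentiable_on_cong_open:
  assumes "open S" "f differentiable_on S" "\<And>y. y \<in> S \<Longrightarrow> f y = g y"
  shows "g differentiable_on S"
  using assms unfolding differentiable_on_eq_differentiable_at[OF assms(1)] differentiable_def
  by (metis has_derivative_transform_within_open)

lemma smooth_on_open: "smooth_on S u \<Longrightarrow> open S"
  by (simp add: smooth_on_def)

lemma smooth_on_diffble: "smooth_on S u \<Longrightarrow> u differentiable_on S"
  unfolding smooth_on_def by (metis dirderivs.simps(1))

lemma smooth_on_diffble_at: "smooth_on S u \<Longrightarrow> x \<in> S \<Longrightarrow> u differentiable (at x)"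
  using smooth_on_diffble smooth_on_open differentiable_on_eq_differentiable_at by blast

lemma smooth_on_deriv: "smooth_on S u \<Longrightarrow> smooth_on S (\<lambda>x. frechet_derivative u (at x) w)"
  unfolding smooth_on_def by (metis dirderivs_snoc)

lemma smooth_on_cong:
  assumes "smooth_on S u" "\<And>x. x \<in> S \<Longrightarrow> u x = v x"
  shows "smooth_on S v"
  unfolding smooth_on_def
proof (intro conjI allI)
  show "open S" using assms smooth_on_open by blast
  fix vs
  show "dirderivs vs v differentiable_on S"
    by (rule differentiable_on_cong_open[OF \<open>open S\<close>, of "dirderivs vs u"])
      (use assms in \<open>auto simp: smooth_on_def intro: dirderivs_cong[OF \<open>open S\<close>]\<close>)
qed

lemma smooth_on_local:
  assumes "open S" "\<And>x. x \<in> S \<Longrightarrow> \<exists>T. open T \<and> x \<in> T \<and> smooth_on T u"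
  shows "smooth_on S u"
  unfolding smooth_on_def
proof (intro conjI allI)
  show "open S" by fact
  fix vs
  show "dirderivs vs u differentiable_on S"
    unfolding differentiable_on_eq_differentiable_at[OF assms(1)]
  proof
    fix x assume "x \<in> S"
    then obtain T where T: "open T" "x \<in> T" "smooth_on T u" using assms by blast
    then show "dirderivs vs u differentiable at x"
      unfolding smooth_on_def using differentiable_on_eq_differentiable_at by blast
  qed
qed

lemma smooth_on_subset: "smooth_on S u \<Longrightarrow> open T \<Longrightarrow> T \<subseteq> S \<Longrightarrow> smooth_on T u"
  unfolding smooth_on_def using differentiable_on_subset by blast

lemma smooth_coind:
  assumes S: "open S" and Pu: "P u"
    and dif: "\<And>u. P u \<Longrightarrow> u differentiable_on S"
    and der: "\<And>u w. P u \<Longrightarrow> \<exists>u'. P u' \<and> (\<forall>x\<in>S. frechet_derivative u (at x) w = u' x)"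
  shows "smooth_on S u"
proof -
  have *: "\<forall>u. P u \<longrightarrow> (\<exists>u'. P u' \<and> (\<forall>x\<in>S. dirderivs vs u x = u' x))" for vs
  proof (induction vs)
    case Nil
    then show ?case by auto
  next
    case (Cons v vs)
    show ?case
    proof (intro allI impI)
      fix u assume "P u"
      then obtain u' where u': "P u'" "\<forall>x\<in>S. dirderivs vs u x = u' x" using Cons by blast
      then obtain u'' where u'': "P u''" "\<forall>x\<in>S. frechet_derivative u' (at x) v = u'' x"
        using der by blast
      have "\<forall>x\<in>S. dirderivs (v # vs) u x = u'' x"
      proof
        fix x assume "x \<in> S"
        have "frechet_derivative (dirderivs vs u) (at x) = frechet_derivative u' (at x)"
          by (rule fd_cong[OF S \<open>x \<in> S\<close>]) (use u' in auto)
        then show "dirderivs (v # vs) u x = u'' x" using u'' \<open>x \<in> S\<close> by simp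
      qed
      then show "\<exists>u'. P u' \<and> (\<forall>x\<in>S. dirderivs (v # vs) u x = u' x)" using u'' by blast
    qed
  qed
  show ?thesis unfolding smooth_on_def
  proof (intro conjI allI)
    fix vs
    obtain u' where "P u'" "\<forall>x\<in>S. dirderivs vs u x = u' x" using * Pu by blast
    then show "dirderivs vs u differentiable_on S"
      using differentiable_on_cong_open[OF S dif[OF \<open>P u'\<close>]] by metis
  qed (rule S)
qed

inductive_set alg :: "'a::real_normed_vector set \<Rightarrow> ('a \<Rightarrow> real) set" for S where
  base: "smooth_on S u \<Longrightarrow> u \<in> alg S"
| add: "u \<in> alg S \<Longrightarrow> v \<in> alg S \<Longrightarrow> (\<lambda>x. u x + v x) \<in> alg S"
| mult: "u \<in> alg S \<Longrightarrow> v \<in> alg S \<Longrightarrow> (\<lambda>x. u x * v x) \<in> alg S"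

lemma alg_diffble: "u \<in> alg S \<Longrightarrow> u differentiable_on S"
  by (induction rule: alg.induct) (auto intro: smooth_on_diffble)

lemma fd_add:
  fixes u v :: "'a::real_normed_vector \<Rightarrow> real"
  shows "u differentiable at x \<Longrightarrow> v differentiable at x \<Longrightarrow>
   frechet_derivative (\<lambda>x. u x + v x) (at x) w = frechet_derivative u (at x) w + frechet_derivative v (at x) w"
proof -
  assume a: "u differentiable at x" "v differentiable at x"
  have "((\<lambda>x. u x + v x) has_derivative (\<lambda>h. frechet_derivative u (at x) h + frechet_derivative v (at x) h)) (at x)"
    using a by (intro has_derivative_add) (auto simp: frechet_derivative_works)
  then show ?thesis by (metis frechet_derivative_at)
qed

lemma fd_mult:
  fixes u v :: "'a::real_normed_vector \<Rightarrow> real"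
  shows "u differentiable at x \<Longrightarrow> v differentiable at x \<Longrightarrow>
   frechet_derivative (\<lambda>x. u x * v x) (at x) w = u x * frechet_derivative v (at x) w + frechet_derivative u (at x) w * v x"
proof -
  assume a: "u differentiable at x" "v differentiable at x"
  have "((\<lambda>x. u x * v x) has_derivative (\<lambda>h. u x * frechet_derivative v (at x) h + frechet_derivative u (at x) h * v x)) (at x)"
    using a by (intro has_derivative_mult) (auto simp: frechet_derivative_works)
  then show ?thesis by (metis frechet_derivative_at)
qed

lemma alg_deriv:
  assumes "u \<in> alg S" "open S"
  shows "\<exists>u'\<in>alg S. \<forall>x\<in>S. frechet_derivative u (at x) w = u' x"
  using assms(1)
proof (induction rule: alg.induct)
  case (base u)
  show ?case by (rule bexI[OF _ alg.base[OF smooth_on_deriv[OF base, of w]]]) simp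
next
  case (add u v)
  then obtain u' v' where "u' \<in> alg S" "v' \<in> alg S" "\<forall>x\<in>S. frechet_derivative u (at x) w = u' x"
    "\<forall>x\<in>S. frechet_derivative v (at x) w = v' x" by blast
  moreover have "\<forall>x\<in>S. u differentiable at x \<and> v differentiable at x"
    using add alg_diffble assms(2) differentiable_on_eq_differentiable_at by blast
  moreover have "(\<lambda>x. u' x + v' x) \<in> alg S" using calculation by (intro alg.add)
  ultimately show ?case by (intro bexI[of _ "\<lambda>x. u' x + v' x"]) (auto simp: fd_add)
next
  case (mult u v)
  then obtain u' v' where "u' \<in> alg S" "v' \<in> alg S" "\<forall>x\<in>S. frechet_derivative u (at x) w = u' x"
    "\<forall>x\<in>S. frechet_derivative v (at x) w = v' x" by blast
  moreover have "\<forall>x\<in>S. u differentiable at x \<and> v differentiable at x"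
    using mult alg_diffble assms(2) differentiable_on_eq_differentiable_at by blast
  moreover have "(\<lambda>x. u x * v' x + u' x * v x) \<in> alg S"
    using calculation mult.hyps by (intro alg.add alg.mult) auto
  ultimately show ?case by (intro bexI[of _ "\<lambda>x. u x * v' x + u' x * v x"]) (auto simp: fd_mult)
qed

lemma alg_smooth: "u \<in> alg S \<Longrightarrow> open S \<Longrightarrow> smooth_on S u"
  by (rule smooth_coind[where P="\<lambda>u. u \<in> alg S"]) (use alg_diffble alg_deriv in blast)+

lemma smooth_on_add: fixes u v :: "'a::real_normed_vector \<Rightarrow> real" assumes "smooth_on S u" "smooth_on S v" shows "smooth_on S (\<lambda>x. u x + v x)"
  using alg_smooth[OF alg.add[OF alg.base[OF assms(1)] alg.base[OF assms(2)]] smooth_on_open[OF assms(1)]] .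

lemma smooth_on_mult: fixes u v :: "'a::real_normed_vector \<Rightarrow> real" assumes "smooth_on S u" "smooth_on S v" shows "smooth_on S (\<lambda>x. u x * v x)"
  using alg_smooth[OF alg.mult[OF alg.base[OF assms(1)] alg.base[OF assms(2)]] smooth_on_open[OF assms(1)]] .

lemma smooth_on_linear:
  fixes l :: "'a::real_normed_vector \<Rightarrow> real"
  assumes "open S" "bounded_linear l"
  shows "smooth_on S (\<lambda>x. l x + c)"
proof (rule smooth_coind[where P="\<lambda>u. \<exists>l c. bounded_linear l \<and> u = (\<lambda>x. l x + c)"])
  show "\<exists>l' c'. bounded_linear l' \<and> (\<lambda>x. l x + c) = (\<lambda>x. l' x + c')" using assms by blast
next
  fix u :: "'a \<Rightarrow> real" assume "\<exists>l c. bounded_linear l \<and> u = (\<lambda>x. l x + c)"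
  then obtain l c where lc: "bounded_linear l" "u = (\<lambda>x. l x + c)" by blast
  have d: "(u has_derivative l) (at x)" for x
    using lc by (auto intro!: derivative_eq_intros bounded_linear_imp_has_derivative)
  then show "u differentiable_on S" by (meson differentiable_at_imp_differentiable_on differentiable_def)
  fix w
  have "(\<lambda>x::'a. l w) = (\<lambda>x. (\<lambda>x. 0) x + l w)" by simp
  moreover have "bounded_linear (\<lambda>x::'a. 0::real)" by simp
  moreover have "\<forall>x\<in>S. frechet_derivative u (at x) w = l w" using d frechet_derivative_at by metis
  ultimately show "\<exists>u'. (\<exists>l c. bounded_linear l \<and> u' = (\<lambda>x. l x + c)) \<and> (\<forall>x\<in>S. frechet_derivative u (at x) w = u' x)"
    by blast
qed (rule assms(1))

lemma smooth_on_const: fixes c :: real shows "open S \<Longrightarrow> smooth_on S (\<lambda>x. c)"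
  using smooth_on_linear[of S "\<lambda>x. 0" c] by simp

lemma smooth_on_lin: fixes l :: "'a::real_normed_vector \<Rightarrow> real" shows "open S \<Longrightarrow> bounded_linear l \<Longrightarrow> smooth_on S l"
  using smooth_on_linear[of S l 0] by simp

lemma smooth_on_cmult: fixes u :: "'a::real_normed_vector \<Rightarrow> real" assumes "smooth_on S u" shows "smooth_on S (\<lambda>x. c * u x)"
  using smooth_on_mult[OF smooth_on_const[OF smooth_on_open[OF assms]] assms] .

lemma smooth_on_uminus: fixes u :: "'a::real_normed_vector \<Rightarrow> real" assumes "smooth_on S u" shows "smooth_on S (\<lambda>x. - u x)"
  using smooth_on_cmult[OF assms, of "-1"] by simp

lemma smooth_on_diff: fixes u v :: "'a::real_normed_vector \<Rightarrow> real" assumes "smooth_on S u" "smooth_on S v" shows "smooth_on S (\<lambda>x. u x - v x)"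
  using smooth_on_add[OF assms(1) smooth_on_uminus[OF assms(2)]] by simp

lemma smooth_on_sum: fixes f :: "'i \<Rightarrow> 'a::real_normed_vector \<Rightarrow> real"
  assumes "open S" "\<And>i. i \<in> I \<Longrightarrow> smooth_on S (f i)" shows "smooth_on S (\<lambda>x. \<Sum>i\<in>I. f i x)"
  using assms(2)
proof (induction I rule: infinite_finite_induct)
  case (insert i I)
  then show ?case using smooth_on_add[of S "f i" "\<lambda>x. \<Sum>i\<in>I. f i x"] by simp
qed (use smooth_on_const[OF assms(1)] in simp_all)

lemma smooth_on_power: fixes u :: "'a::real_normed_vector \<Rightarrow> real" assumes "smooth_on S u" shows "smooth_on S (\<lambda>x. u x ^ k)"
proof (induction k)
  case 0
  then show ?case using smooth_on_const[OF smooth_on_open[OF assms]] by simp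
next
  case (Suc k)
  then show ?case using smooth_on_mult[OF assms Suc] by simp
qed

lemma has_derivative_from_components:
  fixes \<phi> :: "'a::real_normed_vector \<Rightarrow> 'b::euclidean_space"
  assumes "\<And>b. b \<in> Basis \<Longrightarrow> (\<lambda>y. \<phi> y \<bullet> b) differentiable (at x)"
  shows "(\<phi> has_derivative (\<lambda>h. \<Sum>b\<in>Basis. frechet_derivative (\<lambda>y. \<phi> y \<bullet> b) (at x) h *\<^sub>R b)) (at x)"
proof (subst has_derivative_componentwise_within, intro ballI)
  fix i :: 'b assume i: "i \<in> Basis"
  have "(\<lambda>h. (\<Sum>b\<in>Basis. frechet_derivative (\<lambda>y. \<phi> y \<bullet> b) (at x) h *\<^sub>R b) \<bullet> i)
      = frechet_derivative (\<lambda>y. \<phi> y \<bullet> i) (at x)"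
    using i by (simp add: inner_sum_left inner_Basis if_distrib cong: if_cong)
  then show "((\<lambda>x. \<phi> x \<bullet> i) has_derivative (\<lambda>h. (\<Sum>b\<in>Basis. frechet_derivative (\<lambda>y. \<phi> y \<bullet> b) (at x) h *\<^sub>R b) \<bullet> i)) (at x)"
    using assms[OF i] frechet_derivative_works by metis
qed

inductive_set calg :: "'a::real_normed_vector set \<Rightarrow> 'b::real_normed_vector set \<Rightarrow> ('a \<Rightarrow> 'b) \<Rightarrow> ('a \<Rightarrow> real) set"
  for S U \<phi> where
  base: "smooth_on S u \<Longrightarrow> u \<in> calg S U \<phi>"
| comp: "smooth_on U g \<Longrightarrow> (\<lambda>x. g (\<phi> x)) \<in> calg S U \<phi>"
| add: "u \<in> calg S U \<phi> \<Longrightarrow> v \<in> calg S U \<phi> \<Longrightarrow> (\<lambda>x. u x + v x) \<in> calg S U \<phi>"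
| mult: "u \<in> calg S U \<phi> \<Longrightarrow> v \<in> calg S U \<phi> \<Longrightarrow> (\<lambda>x. u x * v x) \<in> calg S U \<phi>"

lemma calg_sum:
  assumes "open S" "\<And>i. i \<in> I \<Longrightarrow> f i \<in> calg S U \<phi>"
  shows "(\<lambda>x. \<Sum>i\<in>I. f i x) \<in> calg S U \<phi>"
  using assms(2)
proof (induction I rule: infinite_finite_induct)
  case (insert i I)
  then show ?case using calg.add[of "f i" S U \<phi> "\<lambda>x. \<Sum>i\<in>I. f i x"] by simp
qed (use calg.base[OF smooth_on_const[OF assms(1), of 0]] in simp_all)

locale comp_setup =
  fixes S :: "'a::real_normed_vector set" and U :: "'b::euclidean_space set" and \<phi> :: "'a \<Rightarrow> 'b"
  assumes S: "open S" and U: "open U" and img: "\<phi> ` S \<subseteq> U"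
    and comps: "\<And>b. b \<in> Basis \<Longrightarrow> smooth_on S (\<lambda>x. \<phi> x \<bullet> b)"
begin

lemma phi_deriv:
  assumes "x \<in> S"
  shows "(\<phi> has_derivative (\<lambda>h. \<Sum>b\<in>Basis. frechet_derivative (\<lambda>y. \<phi> y \<bullet> b) (at x) h *\<^sub>R b)) (at x)"
  by (rule has_derivative_from_components) (use comps smooth_on_diffble_at assms in blast)

lemma comp_deriv:
  fixes g :: "'b \<Rightarrow> real"
  assumes g: "smooth_on U g" and x: "x \<in> S"
  shows "((\<lambda>x. g (\<phi> x)) has_derivative
     (\<lambda>h. \<Sum>b\<in>Basis. frechet_derivative (\<lambda>y. \<phi> y \<bullet> b) (at x) h * frechet_derivative g (at (\<phi> x)) b)) (at x)"
proof -
  have gd: "(g has_derivative frechet_derivative g (at (\<phi> x))) (at (\<phi> x))"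
    using smooth_on_diffble_at[OF g] img x frechet_derivative_works by blast
  have lin: "linear (frechet_derivative g (at (\<phi> x)))"
    using gd has_derivative_linear by blast
  have "((\<lambda>x. g (\<phi> x)) has_derivative (\<lambda>h. frechet_derivative g (at (\<phi> x))
       (\<Sum>b\<in>Basis. frechet_derivative (\<lambda>y. \<phi> y \<bullet> b) (at x) h *\<^sub>R b))) (at x)"
    using has_derivative_compose[OF phi_deriv[OF x] gd] by (simp add: o_def)
  moreover have "\<And>h. frechet_derivative g (at (\<phi> x))
       (\<Sum>b\<in>Basis. frechet_derivative (\<lambda>y. \<phi> y \<bullet> b) (at x) h *\<^sub>R b)
     = (\<Sum>b\<in>Basis. frechet_derivative (\<lambda>y. \<phi> y \<bullet> b) (at x) h * frechet_derivative g (at (\<phi> x)) b)"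
    using lin by (simp add: linear_sum linear_scale)
  ultimately show ?thesis by simp
qed

lemma calg_diffble: "u \<in> calg S U \<phi> \<Longrightarrow> u differentiable_on S"
proof (induction rule: calg.induct)
  case (comp g)
  then show ?case
    unfolding differentiable_on_eq_differentiable_at[OF S] differentiable_def
    using comp_deriv by blast
qed (auto intro: smooth_on_diffble)

lemma calg_deriv:
  assumes "u \<in> calg S U \<phi>"
  shows "\<exists>u'\<in>calg S U \<phi>. \<forall>x\<in>S. frechet_derivative u (at x) w = u' x"
  using assms
proof (induction rule: calg.induct)
  case (base u)
  show ?case by (rule bexI[OF _ calg.base[OF smooth_on_deriv[OF base, of w]]]) simp
next
  case (comp g)
  let ?u' = "\<lambda>x. \<Sum>b\<in>Basis. frechet_derivative (\<lambda>y. \<phi> y \<bullet> b) (at x) w * frechet_derivative g (at (\<phi> x)) b"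
  have "?u' \<in> calg S U \<phi>"
    by (intro calg_sum[OF S] calg.mult calg.base smooth_on_deriv comps
        calg.comp[where g="\<lambda>y. frechet_derivative g (at y) _"] comp)
  moreover have "\<forall>x\<in>S. frechet_derivative (\<lambda>x. g (\<phi> x)) (at x) w = ?u' x"
  proof
    fix x assume x: "x \<in> S"
    show "frechet_derivative (\<lambda>x. g (\<phi> x)) (at x) w = ?u' x"
      by (simp add: frechet_derivative_at[OF comp_deriv[OF comp x], symmetric])
  qed
  ultimately show ?case by (intro bexI[of _ ?u']) simp_all
next
  case (add u v)
  then obtain u' v' where "u' \<in> calg S U \<phi>" "v' \<in> calg S U \<phi>" "\<forall>x\<in>S. frechet_derivative u (at x) w = u' x"
    "\<forall>x\<in>S. frechet_derivative v (at x) w = v' x" by blast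
  moreover have "\<forall>x\<in>S. u differentiable at x \<and> v differentiable at x"
    using add calg_diffble S differentiable_on_eq_differentiable_at by blast
  moreover have "(\<lambda>x. u' x + v' x) \<in> calg S U \<phi>" using calculation by (intro calg.add)
  ultimately show ?case by (intro bexI[of _ "\<lambda>x. u' x + v' x"]) (auto simp: fd_add)
next
  case (mult u v)
  then obtain u' v' where "u' \<in> calg S U \<phi>" "v' \<in> calg S U \<phi>" "\<forall>x\<in>S. frechet_derivative u (at x) w = u' x"
    "\<forall>x\<in>S. frechet_derivative v (at x) w = v' x" by blast
  moreover have "\<forall>x\<in>S. u differentiable at x \<and> v differentiable at x"
    using mult calg_diffble S differentiable_on_eq_differentiable_at by blast
  moreover have "(\<lambda>x. u x * v' x + u' x * v x) \<in> calg S U \<phi>"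
    using calculation mult.hyps by (intro calg.add calg.mult) auto
  ultimately show ?case by (intro bexI[of _ "\<lambda>x. u x * v' x + u' x * v x"]) (auto simp: fd_mult)
qed

lemma calg_smooth: "u \<in> calg S U \<phi> \<Longrightarrow> smooth_on S u"
  by (rule smooth_coind[where P="\<lambda>u. u \<in> calg S U \<phi>", OF S]) (use calg_diffble calg_deriv in blast)+

lemma comp_smooth: fixes g :: "'b \<Rightarrow> real" assumes "smooth_on U g" shows "smooth_on S (\<lambda>x. g (\<phi> x))"
  using calg_smooth[OF calg.comp[OF assms]] .

end

lemma smooth_on_compose:
  fixes \<phi> :: "'a::real_normed_vector \<Rightarrow> 'b::euclidean_space" and g :: "'b \<Rightarrow> real"
  assumes "open S" "\<And>b. b \<in> Basis \<Longrightarrow> smooth_on S (\<lambda>x. \<phi> x \<bullet> b)" "\<phi> ` S \<subseteq> U" "smooth_on U g"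
  shows "smooth_on S (\<lambda>x. g (\<phi> x))"
proof -
  interpret comp_setup S U \<phi>
    using assms smooth_on_open by unfold_locales auto
  show ?thesis using comp_smooth assms(4) .
qed

lemma smooth_on_compose_real:
  fixes \<phi> :: "'a::real_normed_vector \<Rightarrow> real" and g :: "real \<Rightarrow> real"
  assumes "smooth_on S \<phi>" "\<phi> ` S \<subseteq> U" "smooth_on U g"
  shows "smooth_on S (\<lambda>x. g (\<phi> x))"
  by (rule smooth_on_compose[OF smooth_on_open[OF assms(1)] _ assms(2,3)]) (use assms(1) in simp)

lemma smooth_on_powr: "smooth_on {0<..} (\<lambda>x::real. x powr a)"
proof (rule smooth_coind[where P="\<lambda>u. \<exists>c a. u = (\<lambda>x::real. c * x powr a)"])
  fix u :: "real \<Rightarrow> real" assume "\<exists>c a. u = (\<lambda>x. c * x powr a)"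
  then obtain c a where u: "u = (\<lambda>x. c * x powr a)" by blast
  have d: "(u has_derivative (*) (c * (a * x powr (a - 1)))) (at x)" if "x > 0" for x
  proof -
    have "(u has_real_derivative c * (a * x powr (a - 1))) (at x)"
      unfolding u using that by (auto intro!: derivative_eq_intros)
    then show ?thesis by (simp add: has_field_derivative_def)
  qed
  then show "u differentiable_on {0<..}"
    by (meson differentiable_at_imp_differentiable_on differentiable_def greaterThan_iff)
  fix w :: real
  show "\<exists>u'. (\<exists>c a. u' = (\<lambda>x. c * x powr a)) \<and> (\<forall>x\<in>{0<..}. frechet_derivative u (at x) w = u' x)"
  proof (rule exI[of _ "\<lambda>x. (w * c * a) * x powr (a - 1)"], intro conjI ballI)
    fix x :: real assume "x \<in> {0<..}"
    then show "frechet_derivative u (at x) w = w * c * a * x powr (a - 1)"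
      by (simp add: frechet_derivative_at[OF d, symmetric])
  qed auto
qed (simp, rule exI[of _ 1], rule exI[of _ a], simp)

definition Ep :: "real poly \<Rightarrow> real \<Rightarrow> real" where
  "Ep p x = (if 0 < x then poly p (inverse x) * exp (- inverse x) else 0)"

definition Qp :: "real poly \<Rightarrow> real poly" where
  "Qp p = [:0, 0, 1:] * (p - pderiv p)"

lemma Ep_deriv_pos:
  assumes x: "0 < x"
  shows "(Ep p has_real_derivative Ep (Qp p) x) (at x)"
proof -
  have "((\<lambda>x. poly p (inverse x) * exp (- inverse x)) has_real_derivative
     poly (pderiv p) (inverse x) * (- (inverse x * inverse x)) * exp (- inverse x)
     + poly p (inverse x) * (exp (- inverse x) * (inverse x * inverse x))) (at x)"
    using x
    by (auto intro!: derivative_eq_intros DERIV_chain2[OF poly_DERIV] simp: power2_eq_square)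
  moreover have "poly (pderiv p) (inverse x) * (- (inverse x * inverse x)) * exp (- inverse x)
     + poly p (inverse x) * (exp (- inverse x) * (inverse x * inverse x)) = Ep (Qp p) x"
    using x by (simp add: Ep_def Qp_def algebra_simps)
  ultimately have "((\<lambda>x. poly p (inverse x) * exp (- inverse x)) has_real_derivative Ep (Qp p) x) (at x)"
    by simp
  then show ?thesis
    by (rule has_field_derivative_transform_within_open[where S="{0<..}"]) (use x in \<open>auto simp: Ep_def\<close>)
qed

lemma Ep_deriv_neg:
  assumes x: "x < 0"
  shows "(Ep p has_real_derivative Ep (Qp p) x) (at x)"
proof -
  have "((\<lambda>x. 0) has_real_derivative 0) (at x)" by simp
  then have "(Ep p has_real_derivative 0) (at x)"
    by (rule has_field_derivative_transform_within_open[where S="{..<0}"]) (use x in \<open>auto simp: Ep_def\<close>)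
  then show ?thesis using x by (simp add: Ep_def)
qed

lemma poly_exp_lim: "((\<lambda>t::real. t * poly p t * exp (- t)) \<longlongrightarrow> 0) at_top"
proof -
  have eq: "t * poly p t * exp (- t) = (\<Sum>i\<le>degree p. coeff p i * (t ^ Suc i / exp t))" for t
    by (simp add: poly_altdef sum_distrib_left sum_distrib_right exp_minus field_simps)
  have "((\<lambda>t::real. \<Sum>i\<le>degree p. coeff p i * (t ^ Suc i / exp t)) \<longlongrightarrow> (\<Sum>i\<le>degree p. coeff p i * 0)) at_top"
    by (intro tendsto_sum tendsto_mult tendsto_const tendsto_power_div_exp_0)
  then show ?thesis by (simp add: eq)
qed

lemma Ep_deriv_zero: "(Ep p has_real_derivative Ep (Qp p) 0) (at 0)"
proof -
  have r: "((\<lambda>h. (Ep p (0 + h) - Ep p 0) / h) \<longlongrightarrow> 0) (at_right 0)"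
  proof -
    have "((\<lambda>h. (\<lambda>t. t * poly p t * exp (- t)) (inverse h)) \<longlongrightarrow> 0) (at_right (0::real))"
      by (rule filterlim_compose[OF poly_exp_lim filterlim_inverse_at_top_right])
    moreover have "eventually (\<lambda>h. (\<lambda>t. t * poly p t * exp (- t)) (inverse h) = (Ep p (0 + h) - Ep p 0) / h) (at_right (0::real))"
      using eventually_at_right_less[of 0]
      by eventually_elim (auto simp: Ep_def field_simps)
    ultimately show ?thesis by (rule Lim_transform_eventually)
  qed
  have l: "((\<lambda>h. (Ep p (0 + h) - Ep p 0) / h) \<longlongrightarrow> 0) (at_left 0)"
  proof -
    have "eventually (\<lambda>h. 0 = (Ep p (0 + h) - Ep p 0) / h) (at_left (0::real))"
      using eventually_at_left_real[of "-1" "0::real", OF neg_less_0_iff_less[THEN iffD2, OF zero_less_one]]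
      by eventually_elim (auto simp: Ep_def)
    then show ?thesis by (rule Lim_transform_eventually[OF tendsto_const])
  qed
  have "(Ep p has_real_derivative 0) (at 0)"
    unfolding DERIV_def using filterlim_split_at[OF l r] by simp
  then show ?thesis by (simp add: Ep_def)
qed

lemma Ep_deriv: "(Ep p has_real_derivative Ep (Qp p) x) (at x)"
  using Ep_deriv_pos Ep_deriv_neg Ep_deriv_zero by (cases "x < 0"; cases "x = 0") auto

lemma Ep_smult: "Ep (smult c p) x = c * Ep p x"
  by (simp add: Ep_def)

lemma Ep_smooth: "smooth_on UNIV (Ep p)"
proof (rule smooth_coind[where P="\<lambda>u. \<exists>p. u = Ep p"])
  fix u :: "real \<Rightarrow> real" assume "\<exists>p. u = Ep p"
  then obtain p where u: "u = Ep p" by blast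
  have d: "(u has_derivative (*) (Ep (Qp p) x)) (at x)" for x
    using Ep_deriv[of p x] by (simp add: u has_field_derivative_def)
  then show "u differentiable_on UNIV"
    by (meson differentiable_at_imp_differentiable_on differentiable_def)
  fix w :: real
  show "\<exists>u'. (\<exists>p. u' = Ep p) \<and> (\<forall>x\<in>UNIV. frechet_derivative u (at x) w = u' x)"
  proof (rule exI[of _ "Ep (smult w (Qp p))"], intro conjI ballI)
    fix x :: real
    show "frechet_derivative u (at x) w = Ep (smult w (Qp p)) x"
      by (simp add: frechet_derivative_at[OF d, symmetric] Ep_smult)
  qed auto
qed auto

definition E :: "real \<Rightarrow> real" where "E x = (if 0 < x then exp (- inverse x) else 0)"

lemma E_Ep: "E = Ep 1"
  by (auto simp: E_def Ep_def fun_eq_iff)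

lemma E_smooth: "smooth_on UNIV E"
  using Ep_smooth E_Ep by metis

lemma E_pos: "0 < x \<Longrightarrow> 0 < E x" and E_zero: "x \<le> 0 \<Longrightarrow> E x = 0"
  by (auto simp: E_def)

lemma smooth_by_deriv:
  fixes u :: "'a::real_normed_vector \<Rightarrow> real"
  assumes S: "open S" and d: "u differentiable_on S"
    and der: "\<And>w. \<exists>u'. smooth_on S u' \<and> (\<forall>x\<in>S. frechet_derivative u (at x) w = u' x)"
  shows "smooth_on S u"
proof (rule smooth_coind[where P="\<lambda>v. v = u \<or> smooth_on S v", OF S])
  fix v w assume "v = u \<or> smooth_on S v"
  then show "\<exists>u'. (u' = u \<or> smooth_on S u') \<and> (\<forall>x\<in>S. frechet_derivative v (at x) w = u' x)"
  proof
    assume "v = u" then show ?thesis using der[of w] by blast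
  next
    assume "smooth_on S v" then show ?thesis using smooth_on_deriv[of S v w] by blast
  qed
qed (use d smooth_on_diffble in auto)

lemma smooth_on_bilin:
  fixes B :: "'a::real_normed_vector \<Rightarrow> 'a \<Rightarrow> real"
  assumes B: "bounded_bilinear B" and S: "open S"
  shows "smooth_on S (\<lambda>x. B x x)"
proof -
  have d: "((\<lambda>x. B x x) has_derivative (\<lambda>h. B x h + B h x)) (at x)" for x
    using bounded_bilinear.FDERIV[OF B, of "\<lambda>x. x" "\<lambda>h. h" x UNIV "\<lambda>x. x" "\<lambda>h. h"]
    by (simp add: has_derivative_ident)
  show ?thesis
  proof (rule smooth_by_deriv[OF S])
    show "(\<lambda>x. B x x) differentiable_on S"
      using d by (meson differentiable_at_imp_differentiable_on differentiable_def)
    fix w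
    have "bounded_linear (\<lambda>x. B x w + B w x)"
      by (intro bounded_linear_add bounded_bilinear.bounded_linear_left[OF B]
          bounded_bilinear.bounded_linear_right[OF B])
    then have "smooth_on S (\<lambda>x. B x w + B w x)" using smooth_on_lin[OF S] by blast
    moreover have "\<forall>x\<in>S. frechet_derivative (\<lambda>x. B x x) (at x) w = B x w + B w x"
      using frechet_derivative_at[OF d] by metis
    ultimately show "\<exists>u'. smooth_on S u' \<and> (\<forall>x\<in>S. frechet_derivative (\<lambda>x. B x x) (at x) w = u' x)"
      by blast
  qed
qed

lemma smooth_on_inverse: "smooth_on {0<..} (\<lambda>x::real. inverse x)"
  by (rule smooth_on_cong[OF smooth_on_powr[of "-1"]]) (simp add: powr_minus)

lemma smooth_on_invsqrt: "smooth_on {0<..} (\<lambda>x::real. inverse (sqrt x))"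
  by (rule smooth_on_cong[OF smooth_on_powr[of "-1/2"]])
     (simp add: powr_minus powr_half_sqrt[symmetric])

lemma smooth_on_sqrt: "smooth_on {0<..} (\<lambda>x::real. sqrt x)"
  by (rule smooth_on_cong[OF smooth_on_powr[of "1/2"]]) (simp add: powr_half_sqrt)

lemma smooth_on_compose_pos:
  fixes u :: "'a::real_normed_vector \<Rightarrow> real" and g :: "real \<Rightarrow> real"
  assumes "smooth_on S u" "\<And>x. x \<in> S \<Longrightarrow> 0 < u x" "smooth_on {0<..} g"
  shows "smooth_on S (\<lambda>x. g (u x))"
  by (rule smooth_on_compose_real[OF assms(1) _ assms(3)]) (use assms(2) in auto)

subsection \<open>Coordinates on C^(n+1)\<close>

definition r0sq :: "'n::finite pt \<Rightarrow> real" where "r0sq z = (cmod (fst z))^2"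
definition r1sq :: "'n::finite pt \<Rightarrow> real" where "r1sq z = (\<Sum>j\<in>UNIV. (cmod (snd z $ j))^2)"

lemma Lform_r: "Lform z = r0sq z - r1sq z"
  by (simp add: Lform_def r0sq_def r1sq_def)

lemma r0sq_inner: "r0sq z = fst z \<bullet> fst z"
  by (simp add: r0sq_def power2_norm_eq_inner)

lemma r1sq_inner: "r1sq z = snd z \<bullet> snd z"
  by (simp add: r1sq_def inner_vec_def power2_norm_eq_inner)

lemma r1sq_norm: "r1sq z = (norm (snd z))^2"
  by (simp add: r1sq_inner power2_norm_eq_inner)

lemma r0sq_nonneg: "0 \<le> r0sq z" and r1sq_nonneg: "0 \<le> r1sq z"
  by (auto simp: r0sq_def r1sq_norm)

lemma r0sq_pos: "0 < r0sq z \<longleftrightarrow> fst z \<noteq> 0"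
  by (auto simp: r0sq_def)

lemma r1sq_pos: "0 < r1sq z \<longleftrightarrow> snd z \<noteq> 0"
  by (auto simp: r1sq_norm)

lemma r0sq_zero: "r0sq z = 0 \<longleftrightarrow> fst z = 0"
  by (auto simp: r0sq_def)

lemma r1sq_zero: "r1sq z = 0 \<longleftrightarrow> snd z = 0"
  by (auto simp: r1sq_norm)

lemma smooth_r0sq: "open S \<Longrightarrow> smooth_on S (r0sq :: 'n::finite pt \<Rightarrow> real)"
  unfolding r0sq_inner[abs_def]
  by (rule smooth_on_bilin[where B="\<lambda>x y. fst x \<bullet> fst y"])
     (auto intro: bounded_bilinear.comp[OF bounded_bilinear_inner bounded_linear_fst bounded_linear_fst])

lemma smooth_r1sq: "open S \<Longrightarrow> smooth_on S (r1sq :: 'n::finite pt \<Rightarrow> real)"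
  unfolding r1sq_inner[abs_def]
  by (rule smooth_on_bilin[where B="\<lambda>x y. snd x \<bullet> snd y"])
     (auto intro: bounded_bilinear.comp[OF bounded_bilinear_inner bounded_linear_snd bounded_linear_snd])

lemma smooth_Lform: "open S \<Longrightarrow> smooth_on S (Lform :: 'n::finite pt \<Rightarrow> real)"
  unfolding Lform_r[abs_def] by (intro smooth_on_diff smooth_r0sq smooth_r1sq)

lemma r0sq_cscale: "r0sq (cscale c z) = (cmod c)^2 * r0sq z"
  by (simp add: r0sq_def cscale_def norm_mult power_mult_distrib)

lemma r1sq_cscale: "r1sq (cscale c z) = (cmod c)^2 * r1sq z"
  by (simp add: r1sq_def cscale_def norm_mult power_mult_distrib sum_distrib_left)

lemma Lform_cscale: "Lform (cscale c z) = (cmod c)^2 * Lform z"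
  by (simp add: Lform_r r0sq_cscale r1sq_cscale algebra_simps)

lemma cscale_zero_iff: "c \<noteq> 0 \<Longrightarrow> cscale c z = 0 \<longleftrightarrow> z = 0"
  by (auto simp: cscale_def prod_eq_iff vec_eq_iff zero_prod_def)

lemma cscale_of_real: "cscale (complex_of_real t) z = t *\<^sub>R z"
  by (auto simp: cscale_def prod_eq_iff vec_eq_iff complex_eq_iff)

lemma cscale_mult: "cscale c (cscale d z) = cscale (c * d) z"
  by (auto simp: cscale_def prod_eq_iff vec_eq_iff)

lemma cscale_one: "cscale 1 z = z"
  by (auto simp: cscale_def prod_eq_iff vec_eq_iff)

lemma pt_zero_iff: "(z :: 'n::finite pt) = 0 \<longleftrightarrow> fst z = 0 \<and> snd z = 0"
  by (auto simp: prod_eq_iff)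

lemma nullcone_r: "z \<in> nullcone \<Longrightarrow> r0sq z = r1sq z \<and> 0 < r0sq z"
proof -
  assume z: "z \<in> nullcone"
  then have e: "r0sq z = r1sq z" by (simp add: nullcone_def Lform_r)
  have "fst z \<noteq> 0"
  proof
    assume "fst z = 0"
    then have "snd z = 0" using e by (simp add: r0sq_zero[symmetric] r1sq_zero[symmetric])
    with \<open>fst z = 0\<close> z show False by (simp add: nullcone_def pt_zero_iff)
  qed
  then show ?thesis using e r0sq_pos by blast
qed

lemma nullcone_B: "z \<in> nullcone \<Longrightarrow> fst z \<noteq> 0 \<and> snd z \<noteq> 0"
  using nullcone_r r0sq_pos r1sq_pos by metis

lemma open_Bset: "open {z :: 'n::finite pt. fst z \<noteq> 0 \<and> snd z \<noteq> 0}"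
  by (intro open_Collect_conj open_Collect_neq continuous_intros)

lemma nonzero_open: "open (- {0 :: 'n::finite pt})"
  by auto

lemma nullcone_cscale: "z \<in> nullcone \<Longrightarrow> c \<noteq> 0 \<Longrightarrow> cscale c z \<in> nullcone"
  by (simp add: nullcone_def Lform_cscale cscale_zero_iff)

definition sfun :: "'n::finite pt \<Rightarrow> real" where
  "sfun z = r0sq z * r1sq z * (inverse (r0sq z + r1sq z))^2"

definition proj :: "'n::finite pt \<Rightarrow> 'n pt" where
  "proj z = (inverse (sqrt (r0sq z)) *\<^sub>R fst z, inverse (sqrt (r1sq z)) *\<^sub>R snd z)"

definition F0 :: "('n::finite pt \<Rightarrow> real) \<Rightarrow> 'n pt \<Rightarrow> real" where
  "F0 f z = E (sfun z - 1/8) * f (proj z) * inverse (E (1/8))"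

abbreviation Bset :: "'n::finite pt set" where
  "Bset \<equiv> {z. fst z \<noteq> 0 \<and> snd z \<noteq> 0}"

lemma nsq_pos: "z \<noteq> 0 \<Longrightarrow> 0 < r0sq z + r1sq z"
  using r0sq_nonneg[of z] r1sq_nonneg[of z] r0sq_pos[of z] r1sq_pos[of z] pt_zero_iff[of z]
  by linarith

lemma smooth_sfun: "smooth_on (- {0}) (sfun :: 'n::finite pt \<Rightarrow> real)"
proof -
  have "smooth_on (- {0}) (\<lambda>z::'n pt. inverse (r0sq z + r1sq z))"
    by (rule smooth_on_compose_pos[OF smooth_on_add[OF smooth_r0sq smooth_r1sq] _ smooth_on_inverse])
       (auto intro: nsq_pos)
  then show ?thesis unfolding sfun_def[abs_def]
    by (intro smooth_on_mult smooth_on_power smooth_r0sq smooth_r1sq) auto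
qed

lemma smooth_comps_continuous:
  fixes \<phi> :: "'a::real_normed_vector \<Rightarrow> 'b::euclidean_space"
  assumes "open S" "\<And>b. b \<in> Basis \<Longrightarrow> smooth_on S (\<lambda>x. \<phi> x \<bullet> b)"
  shows "continuous_on S \<phi>"
proof (rule continuous_at_imp_continuous_on, intro ballI)
  fix x assume "x \<in> S"
  have "(\<phi> has_derivative (\<lambda>h. \<Sum>b\<in>Basis. frechet_derivative (\<lambda>y. \<phi> y \<bullet> b) (at x) h *\<^sub>R b)) (at x)"
    by (rule has_derivative_from_components) (use assms smooth_on_diffble_at \<open>x \<in> S\<close> in blast)
  then show "isCont \<phi> x" by (rule has_derivative_continuous)
qed

lemma proj_inner: "proj z \<bullet> c = inverse (sqrt (r0sq z)) * (fst z \<bullet> fst c) + inverse (sqrt (r1sq z)) * (snd z \<bullet> snd c)"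
  by (simp add: proj_def inner_prod_def)

lemma smooth_proj: "smooth_on Bset (\<lambda>z::'n::finite pt. proj z \<bullet> c)"
proof -
  have o: "open (Bset :: 'n pt set)" by (rule open_Bset)
  have a: "smooth_on Bset (\<lambda>z::'n pt. inverse (sqrt (r0sq z)))"
    by (rule smooth_on_compose_pos[OF smooth_r0sq[OF o] _ smooth_on_invsqrt]) (simp add: r0sq_pos)
  have b: "smooth_on Bset (\<lambda>z::'n pt. inverse (sqrt (r1sq z)))"
    by (rule smooth_on_compose_pos[OF smooth_r1sq[OF o] _ smooth_on_invsqrt]) (simp add: r1sq_pos)
  have c: "smooth_on Bset (\<lambda>z::'n pt. fst z \<bullet> fst c)"
    by (rule smooth_on_lin[OF o]) (intro bounded_linear_compose[OF bounded_linear_inner_left bounded_linear_fst])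
  have d: "smooth_on Bset (\<lambda>z::'n pt. snd z \<bullet> snd c)"
    by (rule smooth_on_lin[OF o]) (intro bounded_linear_compose[OF bounded_linear_inner_left bounded_linear_snd])
  show ?thesis unfolding proj_inner
    by (intro smooth_on_add smooth_on_mult a b c d)
qed

lemma continuous_proj: "continuous_on (Bset :: 'n::finite pt set) proj"
  by (rule smooth_comps_continuous[OF open_Bset smooth_proj])

lemma sqrt_r0sq: "sqrt (r0sq z) = cmod (fst z)"
  by (simp add: r0sq_def)

lemma sqrt_r1sq: "sqrt (r1sq z) = norm (snd z)"
  by (simp add: r1sq_norm)

lemma proj_null: "z \<in> Bset \<Longrightarrow> proj z \<in> nullcone"
  by (auto simp: nullcone_def Lform_r proj_def r0sq_def r1sq_norm sqrt_r0sq sqrt_r1sq pt_zero_iff)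

lemma fst_proj: "fst (proj z) = inverse (sqrt (r0sq z)) *\<^sub>R fst z"
  and snd_proj: "snd (proj z) $ j = inverse (sqrt (r1sq z)) *\<^sub>R (snd z $ j)"
  by (simp_all add: proj_def)

lemma fst_cscale: "fst (cscale c z) = c * fst z"
  and snd_cscale: "snd (cscale c z) $ j = c * (snd z $ j)"
  by (simp_all add: cscale_def)

lemma proj_cscale:
  assumes c: "c \<noteq> 0" and z: "z \<in> Bset"
  shows "proj (cscale c z) = cscale (c / complex_of_real (cmod c)) (proj z)"
proof -
  have s0: "sqrt (r0sq (cscale c z)) = cmod c * sqrt (r0sq z)"
    by (simp add: r0sq_cscale real_sqrt_mult)
  have s1: "sqrt (r1sq (cscale c z)) = cmod c * sqrt (r1sq z)"
    by (simp add: r1sq_cscale real_sqrt_mult)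
  have cm: "cmod c \<noteq> 0" using c by simp
  have p0: "sqrt (r0sq z) \<noteq> 0" and p1: "sqrt (r1sq z) \<noteq> 0"
    using z r0sq_pos[of z] r1sq_pos[of z] by auto
  have "fst (proj (cscale c z)) = fst (cscale (c / complex_of_real (cmod c)) (proj z))"
    unfolding fst_proj fst_cscale s0 using cm p0 by (simp add: scaleR_conv_of_real field_simps)
  moreover have "snd (proj (cscale c z)) $ j = snd (cscale (c / complex_of_real (cmod c)) (proj z)) $ j" for j
    unfolding snd_proj snd_cscale s1 using cm p1 by (simp add: scaleR_conv_of_real field_simps)
  ultimately show ?thesis by (simp add: prod_eq_iff vec_eq_iff)
qed

lemma sfun_aux: "(k::real) \<noteq> 0 \<Longrightarrow> k * a * (k * b) * ((inverse k)^2 * Y) = a * b * Y"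
  by (simp add: power2_eq_square field_simps)

lemma sfun_cscale: "c \<noteq> 0 \<Longrightarrow> sfun (cscale c z) = sfun z"
proof -
  assume c: "c \<noteq> 0"
  have k: "(cmod c)^2 \<noteq> 0" using c by simp
  have "(cmod c)^2 * r0sq z + (cmod c)^2 * r1sq z = (cmod c)^2 * (r0sq z + r1sq z)"
    by (simp add: algebra_simps)
  then have "(inverse ((cmod c)^2 * r0sq z + (cmod c)^2 * r1sq z))^2
     = (inverse ((cmod c)^2))^2 * (inverse (r0sq z + r1sq z))^2"
    by (simp add: power_mult_distrib)
  then show ?thesis
    unfolding sfun_def r0sq_cscale r1sq_cscale using sfun_aux[OF k] by simp
qed

lemma sfun_notB: "z \<notin> Bset \<Longrightarrow> sfun z = 0"
  by (auto simp: sfun_def r0sq_zero r1sq_zero)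

lemma sfun_null: "z \<in> nullcone \<Longrightarrow> sfun z = 1/4"
proof -
  assume "z \<in> nullcone"
  then have "r0sq z = r1sq z" "0 < r0sq z" using nullcone_r by blast+
  then show ?thesis by (simp add: sfun_def field_simps power2_eq_square)
qed

lemma proj_null_eq: "z \<in> nullcone \<Longrightarrow> proj z = cscale (complex_of_real (inverse (sqrt (r0sq z)))) z"
proof -
  assume "z \<in> nullcone"
  then have "r0sq z = r1sq z" using nullcone_r by blast
  then show ?thesis by (simp add: proj_def cscale_of_real prod_eq_iff flip: of_real_inverse)
qed

context
  fixes f :: "'n::finite pt \<Rightarrow> real"
  assumes fE: "f \<in> Espace"
begin

lemma F0_null: "z \<in> nullcone \<Longrightarrow> F0 f z = f z"
proof -
  assume z: "z \<in> nullcone"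
  then have "0 < r0sq z" using nullcone_r by blast
  then have ne: "complex_of_real (inverse (sqrt (r0sq z))) \<noteq> 0" by simp
  have "f (proj z) = f z"
    using fE z ne by (simp add: Espace_def proj_null_eq)
  moreover have "E (1/8) \<noteq> 0" using E_pos[of "1/8"] by simp
  ultimately show ?thesis by (simp add: F0_def sfun_null[OF z])
qed

lemma F0_homog: "homog00 (F0 f)"
  unfolding homog00_def
proof (intro allI impI)
  fix z :: "'n pt" and c :: complex
  assume z: "z \<noteq> 0" and c: "c \<noteq> 0"
  show "F0 f (cscale c z) = F0 f z"
  proof (cases "z \<in> Bset")
    case True
    have c': "c / complex_of_real (cmod c) \<noteq> 0" using c by simp
    have "f (proj (cscale c z)) = f (proj z)"
      using fE proj_null[OF True] c' by (simp add: Espace_def proj_cscale[OF c True])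
    then show ?thesis by (simp add: F0_def sfun_cscale[OF c])
  next
    case False
    then have "sfun z = 0" by (rule sfun_notB)
    have e1: "E (sfun z - 1/8) = 0"
      by (rule E_zero) (use \<open>sfun z = 0\<close> in linarith)
    have e2: "E (sfun (cscale c z) - 1/8) = 0"
      by (rule E_zero) (use \<open>sfun z = 0\<close> sfun_cscale[OF c, of z] in linarith)
    from e1 e2 show ?thesis unfolding F0_def by simp
  qed
qed

lemma F0_smooth: "smooth_on (- {0}) (F0 f)"
proof (rule smooth_on_local[OF nonzero_open])
  fix x :: "'n pt" assume x: "x \<in> - {0}"
  have cs: "continuous_on (- {0}) (sfun :: 'n pt \<Rightarrow> real)"
    using smooth_sfun smooth_on_diffble differentiable_imp_continuous_on by blast
  show "\<exists>T. open T \<and> x \<in> T \<and> smooth_on T (F0 f)"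
  proof (cases "sfun x < 1/8")
    case True
    let ?T = "- {0} \<inter> sfun -` {..<1/8} :: 'n pt set"
    have oT: "open ?T" using continuous_open_preimage[OF cs nonzero_open, of "{..<1/8}"] by simp
    moreover have "x \<in> ?T" using x True by simp
    moreover have "smooth_on ?T (F0 f)"
    proof (rule smooth_on_cong[OF smooth_on_const[OF oT, of 0]])
      fix y assume "y \<in> ?T"
      then have "E (sfun y - 1/8) = 0" by (intro E_zero) simp
      then show "0 = F0 f y" unfolding F0_def by simp
    qed
    ultimately show ?thesis by blast
  next
    case False
    have xB: "x \<in> Bset"
    proof (rule ccontr)
      assume "x \<notin> Bset"
      then have "sfun x = 0" by (rule sfun_notB)
      with False show False by simp
    qed
    then have "proj x \<in> nullcone" by (rule proj_null)
    then obtain U g where U: "open U" "proj x \<in> U" "smooth_on U g" "\<forall>y\<in>U \<inter> nullcone. g y = f y"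
      using fE by (auto simp: Espace_def smooth_on_subset_def)
    let ?T = "Bset \<inter> proj -` U :: 'n pt set"
    have oT: "open ?T" using continuous_open_preimage[OF continuous_proj open_Bset U(1)] by simp
    have xT: "x \<in> ?T" using xB U by simp
    have TB: "?T \<subseteq> Bset" by blast
    have T0: "?T \<subseteq> - {0}" by (auto simp: pt_zero_iff)
    have s1: "smooth_on ?T (\<lambda>y. E (sfun y - 1/8))"
      by (rule smooth_on_compose_real[OF smooth_on_diff[OF smooth_on_subset[OF smooth_sfun oT T0]
            smooth_on_const[OF oT]] _ E_smooth]) simp
    have s2: "smooth_on ?T (\<lambda>y. g (proj y))"
      by (rule smooth_on_compose[OF oT _ _ U(3)])
         (auto intro: smooth_on_subset[OF smooth_proj oT TB])
    have "smooth_on ?T (F0 f)"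
    proof (rule smooth_on_cong[OF smooth_on_mult[OF smooth_on_mult[OF s1 s2] smooth_on_const[OF oT]]])
      fix y assume y: "y \<in> ?T"
      then have "proj y \<in> U \<inter> nullcone" using proj_null by blast
      then have "g (proj y) = f (proj y)" using U(4) by blast
      then show "E (sfun y - 1/8) * g (proj y) * inverse (E (1/8)) = F0 f y"
        by (simp add: F0_def)
    qed
    then show ?thesis using oT xT by blast
  qed
qed

end

abbreviation D1 :: "('a::real_normed_vector \<Rightarrow> real) \<Rightarrow> 'a \<Rightarrow> 'a \<Rightarrow> real" where
  "D1 u x v \<equiv> frechet_derivative u (at x) v"

lemma d2_eq: "d2 v u x = frechet_derivative (\<lambda>y. D1 u y v) (at x) v"
  by (simp add: d2_def)

lemma fd_cmult:
  fixes g :: "'a::real_normed_vector \<Rightarrow> real"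
  assumes "g differentiable at x"
  shows "frechet_derivative (\<lambda>y. c * g y) (at x) w = c * frechet_derivative g (at x) w"
  using fd_mult[of "\<lambda>y. c" x g w] assms by simp

lemma D1_diffble:
  fixes u :: "'a::real_normed_vector \<Rightarrow> real"
  shows "smooth_on S u \<Longrightarrow> x \<in> S \<Longrightarrow> (\<lambda>y. D1 u y v) differentiable at x"
  using smooth_on_diffble_at[OF smooth_on_deriv] by blast

lemma d2_mult:
  fixes a b :: "'a::real_normed_vector \<Rightarrow> real"
  assumes a: "smooth_on S a" and b: "smooth_on S b" and x: "x \<in> S"
  shows "d2 v (\<lambda>y. a y * b y) x = d2 v a x * b x + 2 * (D1 a x v * D1 b x v) + a x * d2 v b x"
proof -
  have S: "open S" using a smooth_on_open by blast
  have "frechet_derivative (\<lambda>y. D1 (\<lambda>y. a y * b y) y v) (at x)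
      = frechet_derivative (\<lambda>y. a y * D1 b y v + D1 a y v * b y) (at x)"
    by (rule fd_cong[OF S x]) (intro fd_mult smooth_on_diffble_at[OF a] smooth_on_diffble_at[OF b])
  moreover have "frechet_derivative (\<lambda>y. a y * D1 b y v + D1 a y v * b y) (at x) v
     = a x * d2 v b x + D1 a x v * D1 b x v + (D1 a x v * D1 b x v + d2 v a x * b x)"
    using x
    by (simp add: fd_add fd_mult smooth_on_diffble_at[OF a] smooth_on_diffble_at[OF b]
        D1_diffble[OF a] D1_diffble[OF b] d2_eq)
  ultimately show ?thesis by (simp add: d2_eq algebra_simps)
qed

lemma D1_power:
  fixes u :: "'a::real_normed_vector \<Rightarrow> real"
  assumes "u differentiable at y"
  shows "D1 (\<lambda>y. u y ^ k) y v = real k * u y ^ (k - 1) * D1 u y v"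
proof -
  have "((\<lambda>y. u y ^ k) has_derivative (\<lambda>h. of_nat k * D1 u y h * u y ^ (k - 1))) (at y)"
    by (rule has_derivative_power) (use assms frechet_derivative_works in blast)
  then show ?thesis by (simp add: frechet_derivative_at[symmetric] algebra_simps)
qed

lemma d2_power:
  fixes u :: "'a::real_normed_vector \<Rightarrow> real"
  assumes u: "smooth_on S u" and x: "x \<in> S"
  shows "d2 v (\<lambda>y. u y ^ k) x = real k * (real (k - 1) * u x ^ (k - 2) * (D1 u x v)^2 + u x ^ (k - 1) * d2 v u x)"
proof -
  have S: "open S" using u smooth_on_open by blast
  have "frechet_derivative (\<lambda>y. D1 (\<lambda>y. u y ^ k) y v) (at x)
      = frechet_derivative (\<lambda>y. (real k * u y ^ (k - 1)) * D1 u y v) (at x)"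
    by (rule fd_cong[OF S x]) (simp add: D1_power smooth_on_diffble_at[OF u])
  moreover have "frechet_derivative (\<lambda>y. (real k * u y ^ (k - 1)) * D1 u y v) (at x) v
     = (real k * u x ^ (k - 1)) * d2 v u x + real k * (real (k - 1) * u x ^ (k - 1 - 1) * D1 u x v) * D1 u x v"
  proof -
    have du: "u differentiable at x" using smooth_on_diffble_at[OF u x] .
    have "(\<lambda>y. real k * u y ^ (k - 1)) differentiable at x"
      using du by (intro differentiable_mult differentiable_const differentiable_power)
    moreover have "D1 (\<lambda>y. real k * u y ^ (k - 1)) x v = real k * (real (k - 1) * u x ^ (k - 1 - 1) * D1 u x v)"
      using du by (simp add: fd_cmult differentiable_power D1_power)
    ultimately show ?thesis
      using D1_diffble[OF u x] by (simp add: fd_mult d2_eq)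
  qed
  ultimately show ?thesis
    by (simp add: d2_eq power2_eq_square algebra_simps diff_diff_left numeral_2_eq_2)
qed

subsection \<open>The operators Delta and Gr\<close>

definition Gr :: "('n::finite pt \<Rightarrow> real) \<Rightarrow> ('n pt \<Rightarrow> real) \<Rightarrow> 'n pt \<Rightarrow> real" where
  "Gr a b x = (1/4) * ((D1 a x (1, 0) * D1 b x (1, 0) + D1 a x (\<i>, 0) * D1 b x (\<i>, 0))
     - (\<Sum>j\<in>UNIV. D1 a x (0, axis j 1) * D1 b x (0, axis j 1) + D1 a x (0, axis j \<i>) * D1 b x (0, axis j \<i>)))"

lemma Delta_mult:
  fixes a b :: "'n::finite pt \<Rightarrow> real"
  assumes a: "smooth_on S a" and b: "smooth_on S b" and x: "x \<in> S"
  shows "Delta (\<lambda>y. a y * b y) x = Delta a x * b x + 2 * Gr a b x + a x * Delta b x"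
  unfolding Delta_def Gr_def d2_mult[OF a b x]
  by (simp add: algebra_simps sum.distrib sum_distrib_left sum_distrib_right sum_subtractf)

lemma Delta_power:
  fixes u :: "'n::finite pt \<Rightarrow> real"
  assumes u: "smooth_on S u" and x: "x \<in> S"
  shows "Delta (\<lambda>y. u y ^ k) x = real k * real (k - 1) * u x ^ (k - 2) * Gr u u x + real k * u x ^ (k - 1) * Delta u x"
  unfolding Delta_def Gr_def d2_power[OF u x]
  by (simp add: algebra_simps sum.distrib sum_distrib_left sum_distrib_right sum_subtractf power2_eq_square)

lemma Gr_power:
  fixes u :: "'n::finite pt \<Rightarrow> real"
  assumes u: "u differentiable at x"
  shows "Gr (\<lambda>y. u y ^ k) b x = real k * u x ^ (k - 1) * Gr u b x"
  unfolding Gr_def D1_power[OF u]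
  by (simp add: algebra_simps sum.distrib sum_distrib_left sum_distrib_right sum_subtractf)

lemma smooth_d2: "smooth_on S u \<Longrightarrow> smooth_on S (d2 v u)"
  unfolding d2_def by (simp add: smooth_on_deriv)

lemma smooth_Delta:
  fixes u :: "'n::finite pt \<Rightarrow> real"
  assumes u: "smooth_on S u"
  shows "smooth_on S (Delta u)"
proof -
  have S: "open S" using u smooth_on_open by blast
  show ?thesis
    unfolding Delta_def[abs_def]
    by (intro smooth_on_mult smooth_on_const[OF S] smooth_on_diff smooth_on_add smooth_d2[OF u]
        smooth_on_sum[OF S])
qed

lemma Lform_inner: "Lform = (\<lambda>z::'n::finite pt. fst z \<bullet> fst z - snd z \<bullet> snd z)"
  by (simp add: fun_eq_iff Lform_r r0sq_inner r1sq_inner)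

lemma Lform_has_derivative:
  "((Lform :: 'n::finite pt \<Rightarrow> real) has_derivative (\<lambda>h. 2 * (fst y \<bullet> fst h - snd y \<bullet> snd h))) (at y)"
proof -
  have "((\<lambda>z::'n pt. fst z \<bullet> fst z - snd z \<bullet> snd z) has_derivative
     (\<lambda>h. fst y \<bullet> fst h + fst h \<bullet> fst y - (snd y \<bullet> snd h + snd h \<bullet> snd y))) (at y)"
    by (auto intro!: derivative_eq_intros)
  then show ?thesis unfolding Lform_inner by (simp add: inner_commute algebra_simps)
qed

lemma D1_L: "D1 (Lform :: 'n::finite pt \<Rightarrow> real) y v = 2 * (fst y \<bullet> fst v - snd y \<bullet> snd v)"
  by (simp add: frechet_derivative_at[OF Lform_has_derivative, symmetric])

lemma d2_L: "d2 v (Lform :: 'n::finite pt \<Rightarrow> real) x = 2 * (fst v \<bullet> fst v - snd v \<bullet> snd v)"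
proof -
  have "((\<lambda>y::'n pt. 2 * (fst y \<bullet> fst v - snd y \<bullet> snd v)) has_derivative
      (\<lambda>h. 2 * (fst h \<bullet> fst v - snd h \<bullet> snd v))) (at x)"
    by (auto intro!: derivative_eq_intros)
  then show ?thesis
    unfolding d2_eq D1_L by (simp add: frechet_derivative_at[symmetric])
qed

lemma inner_ii: "\<i> \<bullet> \<i> = (1::real)"
  by (simp add: inner_complex_def)

lemma Delta_L: "Delta (Lform :: 'n::finite pt \<Rightarrow> real) x = 1 + real CARD('n)"
  unfolding Delta_def d2_L by (simp add: inner_axis_axis inner_ii)

lemma inner_one_c: "z \<bullet> (1::complex) = Re z" and inner_i_c: "z \<bullet> \<i> = Im z"
  by (simp_all add: inner_complex_def)

lemma D1_L_basis:
  "D1 (Lform :: 'n::finite pt \<Rightarrow> real) x (1, 0) = 2 * Re (fst x)"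
  "D1 (Lform :: 'n::finite pt \<Rightarrow> real) x (\<i>, 0) = 2 * Im (fst x)"
  "D1 (Lform :: 'n::finite pt \<Rightarrow> real) x (0, axis j 1) = - 2 * Re (snd x $ j)"
  "D1 (Lform :: 'n::finite pt \<Rightarrow> real) x (0, axis j \<i>) = - 2 * Im (snd x $ j)"
  by (simp_all add: D1_L inner_axis inner_one_c inner_i_c)

lemma Gr_LL: "Gr (Lform :: 'n::finite pt \<Rightarrow> real) Lform x = Lform x"
proof -
  have cm: "cmod z * cmod z = Re z * Re z + Im z * Im z" for z
  proof -
    have "cmod z ^ 2 = Re z ^ 2 + Im z ^ 2" by (rule cmod_power2)
    then show ?thesis by (simp add: power2_eq_square)
  qed
  show ?thesis
    unfolding Gr_def D1_L_basis Lform_def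
    by (simp add: cm sum_distrib_left algebra_simps power2_eq_square sum.distrib)
qed

lemma pt_decomp:
  fixes z :: "'n::finite pt"
  shows "z = Re (fst z) *\<^sub>R (1, 0) + Im (fst z) *\<^sub>R (\<i>, 0)
    + (\<Sum>j\<in>UNIV. Re (snd z $ j) *\<^sub>R (0, axis j 1) + Im (snd z $ j) *\<^sub>R (0, axis j \<i>))"
proof -
  have f: "fst (\<Sum>j\<in>UNIV. Re (snd z $ j) *\<^sub>R ((0::complex), axis j (1::complex)) + Im (snd z $ j) *\<^sub>R (0, axis j \<i>)) = 0"
    by (simp add: fst_sum)
  have s: "snd (\<Sum>j\<in>UNIV. Re (snd z $ j) *\<^sub>R ((0::complex), axis j (1::complex)) + Im (snd z $ j) *\<^sub>R (0, axis j \<i>)) = snd z"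
  proof -
    have "snd (\<Sum>j\<in>UNIV. Re (snd z $ j) *\<^sub>R ((0::complex), axis j (1::complex)) + Im (snd z $ j) *\<^sub>R (0, axis j \<i>)) $ i = snd z $ i" for i
    proof -
      have "snd (\<Sum>j\<in>UNIV. Re (snd z $ j) *\<^sub>R ((0::complex), axis j (1::complex)) + Im (snd z $ j) *\<^sub>R (0, axis j \<i>)) $ i
          = (\<Sum>j\<in>UNIV. (Re (snd z $ j) *\<^sub>R axis j (1::complex) + Im (snd z $ j) *\<^sub>R axis j \<i>) $ i)"
        by (simp add: snd_sum)
      also have "\<dots> = (\<Sum>j\<in>UNIV. if j = i then Re (snd z $ i) *\<^sub>R 1 + Im (snd z $ i) *\<^sub>R \<i> else 0)"
        by (rule sum.cong) (auto simp: axis_def)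
      also have "\<dots> = snd z $ i" by (simp add: complex_eq_iff)
      finally show ?thesis .
    qed
    then show ?thesis by (simp add: vec_eq_iff)
  qed
  show ?thesis using f s by (simp add: prod_eq_iff complex_eq_iff)
qed

lemma Gr_L:
  fixes b :: "'n::finite pt \<Rightarrow> real"
  assumes b: "b differentiable at x"
  shows "Gr Lform b x = (1/2) * D1 b x x"
proof -
  have lin: "linear (frechet_derivative b (at x))"
    using b by (rule linear_frechet_derivative)
  have "D1 b x x = D1 b x (Re (fst x) *\<^sub>R (1, 0) + Im (fst x) *\<^sub>R (\<i>, 0)
    + (\<Sum>j\<in>UNIV. Re (snd x $ j) *\<^sub>R (0, axis j 1) + Im (snd x $ j) *\<^sub>R (0, axis j \<i>)))"
    using pt_decomp[of x] by simp
  also have "\<dots> = Re (fst x) * D1 b x (1, 0) + Im (fst x) * D1 b x (\<i>, 0)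
    + (\<Sum>j\<in>UNIV. Re (snd x $ j) * D1 b x (0, axis j 1) + Im (snd x $ j) * D1 b x (0, axis j \<i>))"
    unfolding linear_add[OF lin] linear_sum[OF lin] o_def linear_scale[OF lin] by simp
  finally show ?thesis
    unfolding Gr_def D1_L_basis
    by (simp add: algebra_simps sum_distrib_left sum_subtractf sum.distrib sum_negf)
qed

lemma Delta_Lk_e:
  fixes e :: "'n::finite pt \<Rightarrow> real"
  assumes e: "smooth_on S e" and x: "x \<in> S" and k: "1 \<le> k"
    and euler: "D1 e x x = - 2 * real k * e x"
  shows "Delta (\<lambda>y. Lform y ^ k * e y) x
       = real k * (real CARD('n) - real k) * Lform x ^ (k - 1) * e x + Lform x ^ k * Delta e x"
proof -
  have S: "open S" using e smooth_on_open by blast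
  have sL: "smooth_on S (\<lambda>y::'n pt. Lform y ^ k)"
    by (rule smooth_on_power[OF smooth_Lform[OF S]])
  have dL: "(Lform :: 'n pt \<Rightarrow> real) differentiable at x"
    using Lform_has_derivative differentiable_def by blast
  have de: "e differentiable at x" using smooth_on_diffble_at[OF e x] .
  have 1: "Delta (\<lambda>y. Lform y ^ k) x = real k * real (k - 1) * Lform x ^ (k - 1) + real k * Lform x ^ (k - 1) * (1 + real CARD('n))"
  proof -
    have "Delta (\<lambda>y. Lform y ^ k) x = real k * real (k - 1) * Lform x ^ (k - 2) * Lform x + real k * Lform x ^ (k - 1) * (1 + real CARD('n))"
      using Delta_power[OF smooth_Lform[OF S] x, of k] by (simp add: Gr_LL Delta_L)
    moreover have "real k * real (k - 1) * Lform x ^ (k - 2) * Lform x = real k * real (k - 1) * Lform x ^ (k - 1)"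
    proof (cases "k = 1")
      case False
      then have "k - 2 + 1 = k - 1" using k by simp
      then have "Lform x ^ (k - 2) * Lform x = Lform x ^ (k - 1)"
        by (metis power_add power_one_right)
      then show ?thesis by simp
    qed simp
    ultimately show ?thesis by simp
  qed
  have 2: "Gr (\<lambda>y. Lform y ^ k) e x = - (real k * real k) * Lform x ^ (k - 1) * e x"
    using Gr_power[OF dL, of k e] Gr_L[OF de] euler by simp
  have "Delta (\<lambda>y. Lform y ^ k * e y) x = Delta (\<lambda>y. Lform y ^ k) x * e x + 2 * Gr (\<lambda>y. Lform y ^ k) e x + Lform x ^ k * Delta e x"
    using Delta_mult[OF sL e x] by simp
  also have "\<dots> = real k * (real CARD('n) - real k) * Lform x ^ (k - 1) * e x + Lform x ^ k * Delta e x"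
    unfolding 1 2 using k by (simp add: of_nat_diff algebra_simps)
  finally show ?thesis .
qed

definition homk :: "nat \<Rightarrow> ('n::finite pt \<Rightarrow> real) \<Rightarrow> bool" where
  "homk m e \<longleftrightarrow> (\<forall>z. z \<noteq> 0 \<longrightarrow> (\<forall>c. c \<noteq> 0 \<longrightarrow> (cmod c)^(2*m) * e (cscale c z) = e z))"

lemma homog00_homk: "homog00 F \<longleftrightarrow> homk 0 F"
  by (simp add: homog00_def homk_def)

lemma linear_cscale: "linear (cscale c :: 'n::finite pt \<Rightarrow> 'n pt)"
  by (rule linearI) (auto simp: cscale_def prod_eq_iff vec_eq_iff scaleR_conv_of_real algebra_simps)

lemma bounded_linear_cscale: "bounded_linear (cscale c :: 'n::finite pt \<Rightarrow> 'n pt)"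
  using linear_cscale linear_conv_bounded_linear by blast

lemma continuous_on_cscale: "continuous_on S (cscale c :: 'n::finite pt \<Rightarrow> 'n pt)"
  using bounded_linear_cscale linear_continuous_on by blast

subsection \<open>Euler identity\<close>

lemma euler:
  fixes e :: "'n::finite pt \<Rightarrow> real"
  assumes h: "homk m e" and x: "x \<noteq> 0" and d: "e differentiable at x"
  shows "D1 e x x = - 2 * real m * e x"
proof -
  let ?g = "\<lambda>t::real. t ^ (2*m) * e (t *\<^sub>R x)"
  have de0: "(e has_derivative D1 e x) (at x)"
    using d unfolding frechet_derivative_works .
  then have de: "(e has_derivative D1 e x) (at (1 *\<^sub>R x))" by simp
  have sx: "((\<lambda>t::real. t *\<^sub>R x) has_derivative (\<lambda>s. s *\<^sub>R x)) (at 1)"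
    by (auto intro!: derivative_eq_intros)
  have "((\<lambda>t::real. e (t *\<^sub>R x)) has_derivative (\<lambda>s. D1 e x (s *\<^sub>R x))) (at 1)"
    using has_derivative_compose[OF sx de] by (simp add: o_def)
  then have g1: "(?g has_derivative (\<lambda>s. s * (real (2*m) * e x) + D1 e x (s *\<^sub>R x))) (at 1)"
    by (auto intro!: derivative_eq_intros simp: algebra_simps)
  have "(?g has_derivative (\<lambda>s. 0)) (at 1)"
  proof (rule has_derivative_transform_within_open[OF has_derivative_const[of "e x"], where s="{0<..}"])
    fix t :: real assume "t \<in> {0<..}"
    then have t: "0 < t" by simp
    have "(cmod (complex_of_real t))^(2*m) * e (cscale (complex_of_real t) x) = e x"
      using h x t unfolding homk_def by (metis of_real_eq_0_iff order_less_irrefl)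
    then show "e x = ?g t" using t by (simp add: cscale_of_real)
  qed auto
  then have "(\<lambda>s. s * (real (2*m) * e x) + D1 e x (s *\<^sub>R x)) = (\<lambda>s. 0)"
    using g1 has_derivative_unique by blast
  from fun_cong[OF this, of 1] have "real (2*m) * e x + D1 e x x = 0" by simp
  then show ?thesis by simp
qed

subsection \<open>Density of the complement of the null cone\<close>

lemma dense_off_null:
  fixes u v :: "'n::finite pt \<Rightarrow> real"
  assumes cu: "continuous_on (- {0}) u" and cv: "continuous_on (- {0}) v"
    and eq: "\<And>z. z \<noteq> 0 \<Longrightarrow> Lform z \<noteq> 0 \<Longrightarrow> u z = v z"
    and z: "z \<noteq> 0"
  shows "u z = v z"
proof (cases "Lform z = 0")
  case False
  then show ?thesis using eq z by blast
next
  case True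
  then have zN: "z \<in> nullcone" using z by (simp add: nullcone_def)
  then have r: "r0sq z = r1sq z" "0 < r0sq z" using nullcone_r by blast+
  define a where "a = (\<lambda>m::nat. 1 + inverse (real (Suc m)))"
  define zs where "zs = (\<lambda>m. (complex_of_real (a m) * fst z, snd z))"
  have a1: "a m > 1" for m by (simp add: a_def)
  have al: "a \<longlonglongrightarrow> 1"
    unfolding a_def using tendsto_add[OF tendsto_const LIMSEQ_inverse_real_of_nat, of 1] by simp
  have zl: "zs \<longlonglongrightarrow> z"
    unfolding zs_def
    using tendsto_Pair[OF tendsto_mult[OF tendsto_of_real[OF al] tendsto_const, of "fst z"] tendsto_const, of "snd z"]
    by simp
  have zs0: "zs m \<noteq> 0" for m
    using r(2) a1[of m] by (auto simp: zs_def pt_zero_iff r0sq_pos[symmetric])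
  have zsL: "Lform (zs m) \<noteq> 0" for m
  proof -
    have "Lform (zs m) = (a m)^2 * r0sq z - r1sq z"
      by (simp add: zs_def Lform_r r0sq_def r1sq_def norm_mult power_mult_distrib)
    also have "\<dots> = ((a m)^2 - 1) * r0sq z" using r by (simp add: algebra_simps)
    finally have eqL: "Lform (zs m) = ((a m)^2 - 1) * r0sq z" .
    have "0 < (a m)^2 - 1" using one_less_power[OF a1[of m], of 2] by linarith
    then have "0 < ((a m)^2 - 1) * r0sq z" using r(2) by (rule mult_pos_pos)
    then show ?thesis using eqL by linarith
  qed
  have "isCont u z" "isCont v z"
    using cu cv z continuous_on_eq_continuous_at[of "- {0}"] by auto
  then have "(\<lambda>m. u (zs m)) \<longlonglongrightarrow> u z" "(\<lambda>m. v (zs m)) \<longlonglongrightarrow> v z"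
    using isCont_tendsto_compose zl by blast+
  moreover have "(\<lambda>m. u (zs m)) = (\<lambda>m. v (zs m))"
    using eq zs0 zsL by auto
  ultimately show ?thesis using LIMSEQ_unique by metis
qed

lemma homk_extend:
  fixes e :: "'n::finite pt \<Rightarrow> real"
  assumes ce: "continuous_on (- {0}) e"
    and h: "\<And>z c. z \<noteq> 0 \<Longrightarrow> Lform z \<noteq> 0 \<Longrightarrow> c \<noteq> 0 \<Longrightarrow> (cmod c)^(2*m) * e (cscale c z) = e z"
  shows "homk m e"
  unfolding homk_def
proof (intro allI impI)
  fix z :: "'n pt" and c :: complex assume z: "z \<noteq> 0" and c: "c \<noteq> 0"
  have cz: "cscale c y \<in> - {0}" if "y \<in> - {0}" for y using that cscale_zero_iff[OF c, of y] by simp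
  have img: "cscale c ` (- {0}) \<subseteq> (- {0} :: 'n pt set)"
  proof (simp only: image_subset_iff, intro ballI)
    fix y :: "'n pt" assume "y \<in> - {0}" then show "cscale c y \<in> - {0}" by (rule cz)
  qed
  have "continuous_on (- {0}) (\<lambda>z. e (cscale c z))"
    using continuous_on_compose2[OF ce continuous_on_cscale img] .
  then have "continuous_on (- {0}) (\<lambda>z. (cmod c)^(2*m) * e (cscale c z))"
    by (intro continuous_intros)
  then show "(cmod c)^(2*m) * e (cscale c z) = e z"
    using dense_off_null[OF _ ce _ z] h c by blast
qed

lemma vanish_null:
  fixes h q :: "'n::finite pt \<Rightarrow> real"
  assumes ch: "continuous_on (- {0}) h" and cq: "continuous_on (- {0}) q"
    and eq: "\<And>z. z \<noteq> 0 \<Longrightarrow> Lform z \<noteq> 0 \<Longrightarrow> h z = Lform z * q z"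
    and z: "z \<in> nullcone"
  shows "h z = 0"
proof -
  have cL: "continuous_on (- {0}) (Lform :: 'n pt \<Rightarrow> real)"
    using smooth_Lform[OF nonzero_open] smooth_on_diffble differentiable_imp_continuous_on by blast
  have "h z = Lform z * q z"
    by (rule dense_off_null[OF ch continuous_on_mult[OF cL cq] eq]) (use z in \<open>auto simp: nullcone_def\<close>)
  then show ?thesis using z by (simp add: nullcone_def)
qed

definition Bf :: "('a::real_normed_vector \<Rightarrow> real) \<Rightarrow> 'a \<Rightarrow> 'a \<Rightarrow> 'a \<Rightarrow> real" where
  "Bf F p v w = frechet_derivative (\<lambda>y. D1 F y v) (at p) w"

lemma d2_Bf: "d2 v F x = Bf F x v v"
  by (simp add: d2_eq Bf_def)

context
  fixes F :: "'a::real_normed_vector \<Rightarrow> real" and S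
  assumes F: "smooth_on S F"
begin

lemma Bf_lin_right:
  assumes p: "p \<in> S"
  shows "Bf F p v (a *\<^sub>R w1 + b *\<^sub>R w2) = a * Bf F p v w1 + b * Bf F p v w2"
proof -
  have "linear (frechet_derivative (\<lambda>y. D1 F y v) (at p))"
    by (rule linear_frechet_derivative[OF D1_diffble[OF F p]])
  then show ?thesis unfolding Bf_def by (simp add: linear_add linear_scale)
qed

lemma Bf_lin_left:
  assumes p: "p \<in> S"
  shows "Bf F p (a *\<^sub>R v1 + b *\<^sub>R v2) w = a * Bf F p v1 w + b * Bf F p v2 w"
proof -
  have S: "open S" using F smooth_on_open by blast
  have "frechet_derivative (\<lambda>y. D1 F y (a *\<^sub>R v1 + b *\<^sub>R v2)) (at p)
     = frechet_derivative (\<lambda>y. a * D1 F y v1 + b * D1 F y v2) (at p)"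
  proof (rule fd_cong[OF S p])
    fix y assume "y \<in> S"
    then have "linear (frechet_derivative F (at y))"
      using linear_frechet_derivative smooth_on_diffble_at[OF F] by blast
    then show "D1 F y (a *\<^sub>R v1 + b *\<^sub>R v2) = a * D1 F y v1 + b * D1 F y v2"
      by (simp add: linear_add linear_scale)
  qed
  moreover have "frechet_derivative (\<lambda>y. a * D1 F y v1 + b * D1 F y v2) (at p) w
     = a * Bf F p v1 w + b * Bf F p v2 w"
    using D1_diffble[OF F p]
    by (simp add: fd_add fd_cmult Bf_def differentiable_mult)
  ultimately show ?thesis by (simp add: Bf_def)
qed

lemma Bf_pair:
  assumes p: "p \<in> S"
  shows "Bf F p (a *\<^sub>R e + b *\<^sub>R f) (a *\<^sub>R e + b *\<^sub>R f) + Bf F p ((- b) *\<^sub>R e + a *\<^sub>R f) ((- b) *\<^sub>R e + a *\<^sub>R f)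
    = (a^2 + b^2) * (Bf F p e e + Bf F p f f)"
  unfolding Bf_lin_left[OF p] Bf_lin_right[OF p]
  by (simp add: algebra_simps power2_eq_square)

end

lemma cscale_basis:
  fixes c :: complex
  shows "cscale c ((1::complex), 0::complex^'n::finite) = Re c *\<^sub>R (1, 0) + Im c *\<^sub>R (\<i>, 0)"
    "cscale c ((\<i>::complex), 0::complex^'n::finite) = (- Im c) *\<^sub>R (1, 0) + Re c *\<^sub>R (\<i>, 0)"
    "cscale c ((0::complex), axis j (1::complex) :: complex^'n::finite) = Re c *\<^sub>R (0, axis j 1) + Im c *\<^sub>R (0, axis j \<i>)"
    "cscale c ((0::complex), axis j \<i> :: complex^'n::finite) = (- Im c) *\<^sub>R (0, axis j 1) + Re c *\<^sub>R (0, axis j \<i>)"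
  by (auto simp: cscale_def prod_eq_iff vec_eq_iff complex_eq_iff axis_def)

context
  fixes F :: "'n::finite pt \<Rightarrow> real"
  assumes F: "smooth_on (- {0}) F" and h: "homog00 F"
begin

lemma D1_scale:
  assumes y: "y \<noteq> 0" and c: "c \<noteq> 0"
  shows "D1 F y v = D1 F (cscale c y) (cscale c v)"
proof -
  have "frechet_derivative F (at y) = frechet_derivative (F \<circ> cscale c) (at y)"
    by (rule fd_cong[OF nonzero_open]) (use y h c in \<open>auto simp: homog00_def\<close>)
  also have "\<dots> = frechet_derivative F (at (cscale c y)) \<circ> frechet_derivative (cscale c) (at y)"
  proof (rule frechet_derivative_compose)
    show "cscale c differentiable at y"
      using bounded_linear_cscale bounded_linear_imp_differentiable by blast
    have "cscale c y \<in> - {0}" using cscale_zero_iff[OF c, of y] y by simp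
    then show "F differentiable at (cscale c y)"
      by (rule smooth_on_diffble_at[OF F])
  qed
  also have "frechet_derivative (cscale c) (at y) = cscale c"
    by (rule frechet_derivative_at[OF bounded_linear_imp_has_derivative[OF bounded_linear_cscale], symmetric])
  finally show ?thesis by simp
qed

lemma d2_scale:
  assumes x: "x \<noteq> 0" and c: "c \<noteq> 0"
  shows "d2 v F x = Bf F (cscale c x) (cscale c v) (cscale c v)"
proof -
  let ?G = "\<lambda>y'. D1 F y' (cscale c v)"
  have "frechet_derivative (\<lambda>y. D1 F y v) (at x) = frechet_derivative (?G \<circ> cscale c) (at x)"
    by (rule fd_cong[OF nonzero_open]) (use x D1_scale[OF _ c] in auto)
  also have "\<dots> = frechet_derivative ?G (at (cscale c x)) \<circ> frechet_derivative (cscale c) (at x)"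
  proof (rule frechet_derivative_compose)
    show "cscale c differentiable at x"
      using bounded_linear_cscale bounded_linear_imp_differentiable by blast
    have "cscale c x \<in> - {0}" using cscale_zero_iff[OF c, of x] x by simp
    then show "?G differentiable at (cscale c x)"
      by (rule D1_diffble[OF F])
  qed
  also have "frechet_derivative (cscale c) (at x) = cscale c"
    by (rule frechet_derivative_at[OF bounded_linear_imp_has_derivative[OF bounded_linear_cscale], symmetric])
  finally show ?thesis by (simp add: d2_eq Bf_def)
qed

lemma Delta_scale:
  assumes x: "x \<noteq> 0" and c: "c \<noteq> 0"
  shows "Delta F x = (cmod c)^2 * Delta F (cscale c x)"
proof -
  let ?p = "cscale c x"
  have p: "?p \<in> - {0}" using x cscale_zero_iff[OF c, of x] by simp
  have cm: "(cmod c)^2 = (Re c)^2 + (Im c)^2" by (rule cmod_power2)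
  have A: "d2 (1, 0) F x + d2 (\<i>, 0) F x = (cmod c)^2 * (d2 (1, 0) F ?p + d2 (\<i>, 0) F ?p)"
    unfolding d2_scale[OF x c] unfolding cscale_basis d2_Bf cm
    by (rule Bf_pair[OF F p])
  have B: "d2 (0, axis j 1) F x + d2 (0, axis j \<i>) F x = (cmod c)^2 * (d2 (0, axis j 1) F ?p + d2 (0, axis j \<i>) F ?p)" for j
    unfolding d2_scale[OF x c] unfolding cscale_basis d2_Bf cm
    by (rule Bf_pair[OF F p])
  show ?thesis
    unfolding Delta_def A B by (simp add: sum_distrib_left algebra_simps)
qed

lemma Delta_homk: "homk 1 (Delta F)"
  unfolding homk_def using Delta_scale by simp

end

lemma fd_diff_cmult:
  fixes g h :: "'a::real_normed_vector \<Rightarrow> real"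
  assumes "g differentiable at y" "h differentiable at y"
  shows "frechet_derivative (\<lambda>y. g y - c * h y) (at y) w = D1 g y w - c * D1 h y w"
proof -
  have "((\<lambda>y. g y - c * h y) has_derivative (\<lambda>w. D1 g y w - c * D1 h y w)) (at y)"
    using assms unfolding frechet_derivative_works
    by (auto intro!: derivative_eq_intros)
  then show ?thesis by (simp add: frechet_derivative_at[symmetric])
qed

lemma d2_lin:
  fixes a b :: "'a::real_normed_vector \<Rightarrow> real"
  assumes a: "smooth_on S a" and b: "smooth_on S b" and x: "x \<in> S"
  shows "d2 v (\<lambda>y. a y - c * b y) x = d2 v a x - c * d2 v b x"
proof -
  have S: "open S" using a smooth_on_open by blast
  have "frechet_derivative (\<lambda>y. D1 (\<lambda>y. a y - c * b y) y v) (at x)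
      = frechet_derivative (\<lambda>y. D1 a y v - c * D1 b y v) (at x)"
    by (rule fd_cong[OF S x]) (intro fd_diff_cmult smooth_on_diffble_at[OF a] smooth_on_diffble_at[OF b])
  then show ?thesis
    unfolding d2_eq using fd_diff_cmult[OF D1_diffble[OF a x] D1_diffble[OF b x]] by simp
qed

lemma Delta_lin:
  fixes a b :: "'n::finite pt \<Rightarrow> real"
  assumes a: "smooth_on S a" and b: "smooth_on S b" and x: "x \<in> S"
  shows "Delta (\<lambda>y. a y - c * b y) x = Delta a x - c * Delta b x"
  unfolding Delta_def d2_lin[OF a b x]
  by (simp add: algebra_simps sum.distrib sum_distrib_left sum_subtractf)

lemma smooth_continuous: "smooth_on S u \<Longrightarrow> continuous_on S u"
  using smooth_on_diffble differentiable_imp_continuous_on by blast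

lemma exist_step:
  fixes F :: "'n::finite pt \<Rightarrow> real" and k :: nat
  assumes F: "smooth_on (- {0}) F" "homog00 F" "\<forall>z\<in>nullcone. F z = f z"
    and bo: "bigOL k (Delta F)" and km: "Suc k < CARD('n)"
  shows "\<exists>F'. smooth_on (- {0}) F' \<and> homog00 F' \<and> (\<forall>z\<in>nullcone. F' z = f z) \<and> bigOL (Suc k) (Delta F')"
proof -
  obtain e where e: "smooth_on (- {0}) e" "\<And>z. z \<noteq> 0 \<Longrightarrow> Delta F z = Lform z ^ k * e z"
    using bo unfolding bigOL_def by blast
  let ?m = "Suc k"
  have hD: "homk 1 (Delta F)" by (rule Delta_homk[OF F(1,2)])
  have he: "homk ?m e"
  proof (rule homk_extend[OF smooth_continuous[OF e(1)]])
    fix z :: "'n pt" and c :: complex assume z: "z \<noteq> 0" and L: "Lform z \<noteq> 0" and c: "c \<noteq> 0"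
    have cz: "cscale c z \<noteq> 0" using cscale_zero_iff[OF c, of z] z by simp
    have cm: "cmod c \<noteq> 0" using c by simp
    have "(cmod c)^(2*1) * Delta F (cscale c z) = Delta F z" using hD z c unfolding homk_def by blast
    then have "(cmod c)^2 * Delta F (cscale c z) = Delta F z" by simp
    then have "(cmod c)^2 * (Lform (cscale c z) ^ k * e (cscale c z)) = Lform z ^ k * e z"
      using e(2)[OF z] e(2)[OF cz] by simp
    then have "(cmod c)^2 * (((cmod c)^2) ^ k * Lform z ^ k * e (cscale c z)) = Lform z ^ k * e z"
      by (simp add: Lform_cscale power_mult_distrib)
    moreover have pw: "(cmod c)^(2 * Suc k) = (cmod c)^2 * ((cmod c)^2)^k"
      by (metis mult_Suc_right power_add power_mult)
    ultimately have "Lform z ^ k * ((cmod c)^(2 * Suc k) * e (cscale c z)) = Lform z ^ k * e z"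
      unfolding pw by (simp add: algebra_simps)
    then show "(cmod c)^(2 * Suc k) * e (cscale c z) = e z" using L by simp
  qed
  define c0 :: real where "c0 = inverse (real ?m * (real CARD('n) - real ?m))"
  have c0: "c0 * (real ?m * (real CARD('n) - real ?m)) = 1"
  proof -
    have "real ?m < real CARD('n)" using km by linarith
    then have "real ?m * (real CARD('n) - real ?m) \<noteq> 0" by simp
    then show ?thesis unfolding c0_def by (rule left_inverse)
  qed
  define F' where "F' = (\<lambda>z. F z - c0 * (Lform z ^ ?m * e z))"
  have sLe: "smooth_on (- {0}) (\<lambda>z::'n pt. Lform z ^ ?m * e z)"
    by (intro smooth_on_mult smooth_on_power smooth_Lform nonzero_open e(1))
  have sF': "smooth_on (- {0}) F'"
    unfolding F'_def by (intro smooth_on_diff smooth_on_cmult F(1) sLe)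
  have hF': "homog00 F'"
    unfolding homog00_def F'_def
  proof (intro allI impI)
    fix z :: "'n pt" and c :: complex assume z: "z \<noteq> 0" and c: "c \<noteq> 0"
    have "(cmod c)^(2 * ?m) * e (cscale c z) = e z" using he z c unfolding homk_def by blast
    moreover have pw: "(cmod c)^(2 * Suc k) = (cmod c)^2 * ((cmod c)^2)^k"
      by (metis mult_Suc_right power_add power_mult)
    ultimately have h1: "(cmod c)^2 * ((cmod c)^2)^k * e (cscale c z) = e z" by simp
    have "Lform (cscale c z) ^ ?m * e (cscale c z) = Lform z ^ ?m * ((cmod c)^2 * ((cmod c)^2)^k * e (cscale c z))"
      by (simp add: Lform_cscale power_mult_distrib algebra_simps)
    also have "\<dots> = Lform z ^ ?m * e z" by (simp only: h1)
    finally have "Lform (cscale c z) ^ ?m * e (cscale c z) = Lform z ^ ?m * e z" .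
    moreover have "F (cscale c z) = F z" using F(2) z c unfolding homog00_def by blast
    ultimately show "F (cscale c z) - c0 * (Lform (cscale c z) ^ ?m * e (cscale c z)) = F z - c0 * (Lform z ^ ?m * e z)"
      by simp
  qed
  have nF': "\<forall>z\<in>nullcone. F' z = f z"
    using F(3) unfolding F'_def by (simp add: nullcone_def)
  have "bigOL ?m (Delta F')"
    unfolding bigOL_def
  proof (intro exI conjI allI impI)
    show "smooth_on (- {0}) (\<lambda>x. - c0 * Delta e x)"
      by (intro smooth_on_cmult smooth_Delta e(1))
    fix x :: "'n pt" assume x: "x \<noteq> 0"
    then have x': "x \<in> - {0}" by simp
    have eu: "D1 e x x = - 2 * real ?m * e x"
      by (rule euler[OF he x smooth_on_diffble_at[OF e(1) x']])
    have "Delta F' x = Delta F x - c0 * Delta (\<lambda>z. Lform z ^ ?m * e z) x"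
      unfolding F'_def by (rule Delta_lin[OF F(1) sLe x'])
    also have "\<dots> = Lform x ^ k * e x - c0 * (real ?m * (real CARD('n) - real ?m) * Lform x ^ k * e x + Lform x ^ ?m * Delta e x)"
      using Delta_Lk_e[OF e(1) x' _ eu] e(2)[OF x] by simp
    also have "\<dots> = Lform x ^ ?m * (- c0 * Delta e x)"
    proof -
      have eq: "c0 * (real ?m * (real CARD('n) - real ?m) * Lform x ^ k * e x) = Lform x ^ k * e x"
        using c0 by (simp only: mult.assoc[symmetric])
      show ?thesis by (simp only: distrib_left eq) (simp add: algebra_simps)
    qed
    finally show "Delta F' x = Lform x ^ ?m * (- c0 * Delta e x)" .
  qed
  then show ?thesis using sF' hF' nF' by blast
qed

lemma exist_all:
  fixes f :: "'n::finite pt \<Rightarrow> real"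
  assumes fE: "f \<in> Espace"
  shows "k < CARD('n) \<Longrightarrow> \<exists>F. smooth_on (- {0}) F \<and> homog00 F \<and> (\<forall>z\<in>nullcone. F z = f z) \<and> bigOL k (Delta F)"
proof (induction k)
  case 0
  have "bigOL 0 (Delta (F0 f))"
    unfolding bigOL_def using smooth_Delta[OF F0_smooth[OF fE]] by auto
  then show ?case using F0_smooth[OF fE] F0_homog[OF fE] F0_null[OF fE] by blast
next
  case (Suc k)
  then obtain F where "smooth_on (- {0}) F" "homog00 F" "\<forall>z\<in>nullcone. F z = f z" "bigOL k (Delta F)"
    by auto
  then show ?case using exist_step Suc.prems by blast
qed

lemma existence:
  fixes f :: "'n::finite pt \<Rightarrow> real"
  assumes "CARD('n) \<ge> 2" and fE: "f \<in> Espace"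
  shows "\<exists>F. good_ext f F"
  using exist_all[OF fE, of "CARD('n) - 1"] assms(1) unfolding good_ext_def by auto

lemma param_deriv:
  fixes G :: "real \<times> 'a::euclidean_space \<Rightarrow> real"
  assumes G: "smooth_on (UNIV \<times> S) G" and S: "open S" and z: "z \<in> S"
  shows "((\<lambda>z. integral {0..1} (\<lambda>t. G (t, z))) has_derivative
          (\<lambda>w. integral {0..1} (\<lambda>t. D1 G (t, z) (0, w)))) (at z)"
proof -
  obtain r where r: "r > 0" "ball z r \<subseteq> S" using S z open_contains_ball by blast
  let ?U = "ball z r"
  define fx where "fx x t = Blinfun (\<lambda>w. D1 G (t, x) (0, w))" for x t
  have dG: "(G has_derivative D1 G (t, x)) (at (t, x))" if "x \<in> S" for x t
    using smooth_on_diffble_at[OF G] that frechet_derivative_works by blast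
  have bl: "bounded_linear (\<lambda>w. D1 G (t, x) (0, w))" if "x \<in> S" for x t
    by (rule bounded_linear_compose[OF has_derivative_bounded_linear[OF dG[OF that]]])
       (intro bounded_linear_Pair bounded_linear_zero bounded_linear_ident)
  have fxa: "blinfun_apply (fx x t) = (\<lambda>w. D1 G (t, x) (0, w))" if "x \<in> S" for x t
    unfolding fx_def using bl[OF that] by (rule bounded_linear_Blinfun_apply)
  have d: "((\<lambda>x. G (t, x)) has_derivative (\<lambda>w. D1 G (t, x) (0, w))) (at x)" if "x \<in> S" for x t
  proof -
    have "((\<lambda>x. (t, x)) has_derivative (\<lambda>w. (0, w))) (at x)"
      by (auto intro!: derivative_eq_intros)
    from has_derivative_compose[OF this dG[OF that]] show ?thesis by (simp add: o_def)
  qed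
  have cG: "continuous_on (UNIV \<times> S) G" by (rule smooth_continuous[OF G])
  have cD: "continuous_on (UNIV \<times> S) (\<lambda>p. D1 G p (0, i))" for i
    by (rule smooth_continuous[OF smooth_on_deriv[OF G]])
  have cfx: "continuous_on (?U \<times> cbox 0 1) (\<lambda>(x, t). fx x t)"
  proof (rule continuous_on_blinfun_componentwise)
    fix i :: 'a assume "i \<in> Basis"
    have "continuous_on (?U \<times> cbox 0 1) (\<lambda>p. D1 G (snd p, fst p) (0, i))"
      by (rule continuous_on_compose2[OF cD[of i]]) (use r in \<open>auto intro!: continuous_intros\<close>)
    then show "continuous_on (?U \<times> cbox 0 1) (\<lambda>p. blinfun_apply (case p of (x, t) \<Rightarrow> fx x t) i)"
      by (rule continuous_on_eq) (use r fxa in auto)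
  qed
  have cfxz: "continuous_on (cbox 0 1) (fx z)"
    by (rule continuous_on_compose2[OF cfx, of _ "\<lambda>t. (z, t)", simplified])
       (use r in \<open>auto intro!: continuous_intros\<close>)
  have L: "((\<lambda>x. integral (cbox 0 1) (\<lambda>t. G (t, x))) has_derivative integral (cbox 0 1) (fx z)) (at z within ?U)"
  proof (rule leibniz_rule[where f="\<lambda>x t. G (t, x)" and fx=fx])
    fix x t assume "x \<in> ?U" "t \<in> cbox (0::real) 1"
    then have "x \<in> S" using r by blast
    then show "((\<lambda>x. G (t, x)) has_derivative blinfun_apply (fx x t)) (at x within ?U)"
      using d[of x t] fxa[of x t] by (simp add: has_derivative_at_withinI)
  next
    fix x assume "x \<in> ?U"
    then have x: "x \<in> S" using r by blast
    have "continuous_on (cbox 0 1) (\<lambda>t. G (t, x))"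
      by (rule continuous_on_compose2[OF cG]) (use x in \<open>auto intro!: continuous_intros\<close>)
    then show "(\<lambda>t. G (t, x)) integrable_on cbox 0 1" by (rule integrable_continuous)
  qed (use cfx r in auto)
  then have L': "((\<lambda>x. integral (cbox 0 1) (\<lambda>t. G (t, x))) has_derivative integral (cbox 0 1) (fx z)) (at z)"
    using at_within_open[of z ?U] r by simp
  have "blinfun_apply (integral (cbox 0 1) (fx z)) = (\<lambda>w. integral {0..1} (\<lambda>t. D1 G (t, z) (0, w)))"
  proof
    fix w
    show "blinfun_apply (integral (cbox 0 1) (fx z)) w = integral {0..1} (\<lambda>t. D1 G (t, z) (0, w))"
      using blinfun_apply_integral[OF integrable_continuous[OF cfxz], of w] fxa[OF z]
      by (simp add: cbox_interval)
  qed
  then show ?thesis using L' by (simp add: cbox_interval)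
qed

definition isparam :: "'a::euclidean_space set \<Rightarrow> ('a \<Rightarrow> real) \<Rightarrow> bool" where
  "isparam S v \<longleftrightarrow> (\<exists>G :: real \<times> 'a \<Rightarrow> real. smooth_on (UNIV \<times> S) G \<and> v = (\<lambda>z. integral {0..1} (\<lambda>t. G (t, z))))"

lemma param_smooth:
  fixes G :: "real \<times> 'a::euclidean_space \<Rightarrow> real"
  assumes S: "open S" and G: "smooth_on (UNIV \<times> S) G"
  shows "smooth_on S (\<lambda>z. integral {0..1} (\<lambda>t. G (t, z)))"
proof (rule smooth_coind[where P="isparam S", OF S])
  show "isparam S (\<lambda>z. integral {0..1} (\<lambda>t. G (t, z)))"
    unfolding isparam_def using G by blast
next
  fix v :: "'a \<Rightarrow> real"
  assume "isparam S v"
  then obtain G :: "real \<times> 'a \<Rightarrow> real" where G: "smooth_on (UNIV \<times> S) G" and v: "v = (\<lambda>z. integral {0..1} (\<lambda>t. G (t, z)))"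
    unfolding isparam_def by blast
  show "v differentiable_on S"
    unfolding differentiable_on_eq_differentiable_at[OF S] differentiable_def v
    using param_deriv[OF G S] by blast
next
  fix v :: "'a \<Rightarrow> real" and w
  assume "isparam S v"
  then obtain G :: "real \<times> 'a \<Rightarrow> real" where G: "smooth_on (UNIV \<times> S) G" and v: "v = (\<lambda>z. integral {0..1} (\<lambda>t. G (t, z)))"
    unfolding isparam_def by blast
  let ?G' = "\<lambda>p. D1 G p (0, w)"
  have "smooth_on (UNIV \<times> S) ?G'" by (rule smooth_on_deriv[OF G])
  then have "isparam S (\<lambda>z. integral {0..1} (\<lambda>t. ?G' (t, z)))"
    unfolding isparam_def by blast
  moreover have "\<forall>x\<in>S. frechet_derivative v (at x) w = integral {0..1} (\<lambda>t. ?G' (t, x))"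
    using frechet_derivative_at[OF param_deriv[OF G S]] unfolding v by metis
  ultimately show "\<exists>u'. isparam S u' \<and> (\<forall>x\<in>S. frechet_derivative v (at x) w = u' x)"
    by blast
qed

definition rho0 :: "'n::finite pt \<Rightarrow> real" where "rho0 z = sqrt (r0sq z)"
definition rho1 :: "'n::finite pt \<Rightarrow> real" where "rho1 z = sqrt (r1sq z)"

definition gam :: "real \<times> 'n::finite pt \<Rightarrow> 'n pt" where
  "gam p = (((rho1 (snd p) + fst p * (rho0 (snd p) - rho1 (snd p))) * inverse (rho0 (snd p))) *\<^sub>R fst (snd p), snd (snd p))"

definition Gint :: "('n::finite pt \<Rightarrow> real) \<Rightarrow> real \<times> 'n pt \<Rightarrow> real" where
  "Gint u p = D1 u (gam p) (fst (snd p), 0)"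

definition Iu :: "('n::finite pt \<Rightarrow> real) \<Rightarrow> 'n pt \<Rightarrow> real" where
  "Iu u z = inverse (rho0 z * (rho0 z + rho1 z)) * integral {0..1} (\<lambda>t. Gint u (t, z))"

definition hdiv :: "('n::finite pt \<Rightarrow> real) \<Rightarrow> 'n pt \<Rightarrow> real" where
  "hdiv u z = (if Lform z \<noteq> 0 then u z * Lform z * inverse ((Lform z)^2) else Iu u z)"

abbreviation Wset :: "(real \<times> 'n::finite pt) set" where
  "Wset \<equiv> UNIV \<times> Bset"

lemma open_Wset: "open (Wset :: (real \<times> 'n::finite pt) set)"
  using open_Bset by (intro open_Times) auto

lemma rho_pos: "z \<in> Bset \<Longrightarrow> 0 < rho0 z \<and> 0 < rho1 z"
  by (simp add: rho0_def rho1_def r0sq_pos r1sq_pos)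

lemma rho0_pos [simp]: "fst z \<noteq> 0 \<Longrightarrow> 0 < rho0 z"
  by (simp add: rho0_def r0sq_pos)

lemma rho1_pos [simp]: "snd z \<noteq> 0 \<Longrightarrow> 0 < rho1 z"
  by (simp add: rho1_def r1sq_pos)

lemma Lform_rho: "Lform z = (rho0 z - rho1 z) * (rho0 z + rho1 z)"
  using r0sq_nonneg[of z] r1sq_nonneg[of z]
  by (simp add: Lform_r rho0_def rho1_def algebra_simps)

lemma smooth_r0sq_snd: "smooth_on Wset (\<lambda>p::real \<times> 'n::finite pt. r0sq (snd p))"
  unfolding r0sq_inner
  by (rule smooth_on_bilin[OF _ open_Wset, where B="\<lambda>p q. fst (snd p) \<bullet> fst (snd q)"])
     (intro bounded_bilinear.comp[OF bounded_bilinear_inner] bounded_linear_compose[OF bounded_linear_fst bounded_linear_snd])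

lemma smooth_r1sq_snd: "smooth_on Wset (\<lambda>p::real \<times> 'n::finite pt. r1sq (snd p))"
  unfolding r1sq_inner
  by (rule smooth_on_bilin[OF _ open_Wset, where B="\<lambda>p q. snd (snd p) \<bullet> snd (snd q)"])
     (intro bounded_bilinear.comp[OF bounded_bilinear_inner] bounded_linear_compose[OF bounded_linear_snd bounded_linear_snd])

lemma smooth_rho0_snd: "smooth_on Wset (\<lambda>p::real \<times> 'n::finite pt. rho0 (snd p))"
  unfolding rho0_def
  by (rule smooth_on_compose_pos[OF smooth_r0sq_snd _ smooth_on_sqrt]) (auto simp: r0sq_pos)

lemma smooth_rho1_snd: "smooth_on Wset (\<lambda>p::real \<times> 'n::finite pt. rho1 (snd p))"
  unfolding rho1_def
  by (rule smooth_on_compose_pos[OF smooth_r1sq_snd _ smooth_on_sqrt]) (auto simp: r1sq_pos)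

lemma smooth_invrho0_snd: "smooth_on Wset (\<lambda>p::real \<times> 'n::finite pt. inverse (rho0 (snd p)))"
  by (rule smooth_on_compose_pos[OF smooth_rho0_snd _ smooth_on_inverse]) auto

lemma gam_inner: "gam p \<bullet> c = ((rho1 (snd p) + fst p * (rho0 (snd p) - rho1 (snd p))) * inverse (rho0 (snd p))) * (fst (snd p) \<bullet> fst c)
   + snd (snd p) \<bullet> snd c"
  by (simp add: gam_def inner_prod_def)

lemma smooth_gam: "smooth_on Wset (\<lambda>p::real \<times> 'n::finite pt. gam p \<bullet> c)"
proof -
  have o: "open (Wset :: (real \<times> 'n pt) set)" by (rule open_Wset)
  have l1: "smooth_on Wset (\<lambda>p::real \<times> 'n pt. fst p)"
    by (rule smooth_on_lin[OF o bounded_linear_fst])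
  have l2: "smooth_on Wset (\<lambda>p::real \<times> 'n pt. fst (snd p) \<bullet> fst c)"
    by (rule smooth_on_lin[OF o])
       (intro bounded_linear_compose[OF bounded_linear_inner_left] bounded_linear_compose[OF bounded_linear_fst bounded_linear_snd])
  have l3: "smooth_on Wset (\<lambda>p::real \<times> 'n pt. snd (snd p) \<bullet> snd c)"
    by (rule smooth_on_lin[OF o])
       (intro bounded_linear_compose[OF bounded_linear_inner_left] bounded_linear_compose[OF bounded_linear_snd bounded_linear_snd])
  show ?thesis unfolding gam_inner
    by (intro smooth_on_add smooth_on_mult smooth_on_diff l1 l2 l3 smooth_rho0_snd smooth_rho1_snd smooth_invrho0_snd)
qed

lemma gam_nonzero: "p \<in> Wset \<Longrightarrow> gam p \<in> - {0}"
  by (auto simp: gam_def pt_zero_iff)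

lemma gam_img: "gam ` (Wset :: (real \<times> 'n::finite pt) set) \<subseteq> - {0}"
proof (simp only: image_subset_iff, intro ballI)
  fix p :: "real \<times> 'n pt" assume "p \<in> Wset" then show "gam p \<in> - {0}" by (rule gam_nonzero)
qed

lemma D1_expand:
  fixes u :: "'a::euclidean_space \<Rightarrow> real"
  assumes "u differentiable at y"
  shows "D1 u y w = (\<Sum>b\<in>Basis. (w \<bullet> b) * D1 u y b)"
proof -
  have lin: "linear (frechet_derivative u (at y))" using assms by (rule linear_frechet_derivative)
  have "D1 u y w = D1 u y (\<Sum>b\<in>Basis. (w \<bullet> b) *\<^sub>R b)" by (simp add: euclidean_representation)
  also have "\<dots> = (\<Sum>b\<in>Basis. (w \<bullet> b) * D1 u y b)"
    unfolding linear_sum[OF lin] o_def linear_scale[OF lin] by simp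
  finally show ?thesis .
qed

context
  fixes u :: "'n::finite pt \<Rightarrow> real"
  assumes u: "smooth_on (- {0}) u" and u0: "\<forall>z\<in>nullcone. u z = 0"
begin

lemma smooth_Gint: "smooth_on Wset (Gint u)"
proof -
  have o: "open (Wset :: (real \<times> 'n pt) set)" by (rule open_Wset)
  have "smooth_on Wset (\<lambda>p. \<Sum>b\<in>Basis. ((fst (snd p), 0::complex^'n) \<bullet> b) * D1 u (gam p) b)"
  proof (intro smooth_on_sum[OF o] smooth_on_mult)
    fix b :: "'n pt"
    show "smooth_on Wset (\<lambda>p::real \<times> 'n pt. (fst (snd p), 0::complex^'n) \<bullet> b)"
      by (rule smooth_on_lin[OF o])
         (intro bounded_linear_compose[OF bounded_linear_inner_left] bounded_linear_Pair
           bounded_linear_zero bounded_linear_compose[OF bounded_linear_fst bounded_linear_snd])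
    show "smooth_on Wset (\<lambda>p. D1 u (gam p) b)"
      by (rule smooth_on_compose[OF o smooth_gam gam_img smooth_on_deriv[OF u]])
  qed
  then show ?thesis
  proof (rule smooth_on_cong)
    fix p :: "real \<times> 'n pt" assume "p \<in> Wset"
    then have "u differentiable at (gam p)" using smooth_on_diffble_at[OF u] gam_nonzero by blast
    then show "(\<Sum>b\<in>Basis. ((fst (snd p), 0::complex^'n) \<bullet> b) * D1 u (gam p) b) = Gint u p"
      unfolding Gint_def by (rule D1_expand[symmetric])
  qed
qed

lemma smooth_Iu: "smooth_on Bset (Iu u)"
proof -
  have o: "open (Bset :: 'n pt set)" by (rule open_Bset)
  have i: "smooth_on Bset (\<lambda>z::'n pt. integral {0..1} (\<lambda>t. Gint u (t, z)))"
    by (rule param_smooth[OF o smooth_Gint])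
  have r0: "smooth_on Bset (rho0 :: 'n pt \<Rightarrow> real)" unfolding rho0_def[abs_def]
    by (rule smooth_on_compose_pos[OF smooth_r0sq[OF o] _ smooth_on_sqrt]) (simp add: r0sq_pos)
  have r1: "smooth_on Bset (rho1 :: 'n pt \<Rightarrow> real)" unfolding rho1_def[abs_def]
    by (rule smooth_on_compose_pos[OF smooth_r1sq[OF o] _ smooth_on_sqrt]) (simp add: r1sq_pos)
  have "smooth_on Bset (\<lambda>z::'n pt. inverse (rho0 z * (rho0 z + rho1 z)))"
    by (rule smooth_on_compose_pos[OF smooth_on_mult[OF r0 smooth_on_add[OF r0 r1]] _ smooth_on_inverse])
       (auto intro!: mult_pos_pos add_pos_pos)
  then show ?thesis unfolding Iu_def[abs_def] by (rule smooth_on_mult[OF _ i])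
qed

lemma gam_affine:
  "gam (t, z) = gam (0, z) + t *\<^sub>R (((rho0 z - rho1 z) * inverse (rho0 z)) *\<^sub>R (fst z, 0))"
  by (simp add: gam_def prod_eq_iff algebra_simps scaleR_add_left)

lemma ftc:
  assumes z: "z \<in> Bset"
  shows "u z = (rho0 z - rho1 z) * inverse (rho0 z) * integral {0..1} (\<lambda>t. Gint u (t, z))"
proof -
  let ?k = "(rho0 z - rho1 z) * inverse (rho0 z)"
  let ?V = "?k *\<^sub>R (fst z, 0::complex^'n)"
  have rp: "0 < rho0 z" "0 < rho1 z" using rho_pos[OF z] by auto
  have g1: "gam (1, z) = z"
    using rp by (simp add: gam_def prod_eq_iff)
  have g0N: "gam (0, z) \<in> nullcone"
  proof -
    have "r0sq (gam (0, z)) = (rho1 z * inverse (rho0 z))^2 * r0sq z"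
      by (simp add: gam_def r0sq_def norm_scaleR power_mult_distrib)
    also have "\<dots> = r1sq z"
      using rp r0sq_nonneg[of z] r1sq_nonneg[of z]
      by (simp add: rho0_def rho1_def power_mult_distrib field_simps)
    finally have "Lform (gam (0, z)) = 0"
      by (simp add: Lform_r gam_def r1sq_def)
    moreover have "gam (0, z) \<noteq> 0" using gam_nonzero[of "(0, z)"] z by simp
    ultimately show ?thesis by (simp add: nullcone_def)
  qed
  have dg: "((\<lambda>t. gam (t, z)) has_derivative (\<lambda>s. s *\<^sub>R ?V)) (at t)" for t
    by (subst gam_affine) (auto intro!: derivative_eq_intros)
  have vd: "((\<lambda>t. u (gam (t, z))) has_vector_derivative (?k * Gint u (t, z))) (at t within {0..1})" for t
  proof -
    have gz: "gam (t, z) \<in> - {0}" using gam_nonzero[of "(t, z)"] z by simp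
    have du: "(u has_derivative D1 u (gam (t, z))) (at (gam (t, z)))"
      using smooth_on_diffble_at[OF u gz] frechet_derivative_works by blast
    have lin: "linear (D1 u (gam (t, z)))" using du has_derivative_linear by blast
    have "((\<lambda>t. u (gam (t, z))) has_derivative (\<lambda>s. D1 u (gam (t, z)) (s *\<^sub>R ?V))) (at t)"
      using has_derivative_compose[OF dg du] by (simp add: o_def)
    moreover have "D1 u (gam (t, z)) (s *\<^sub>R ?V) = s *\<^sub>R (?k * Gint u (t, z))" for s
      unfolding Gint_def linear_scale[OF lin] by simp
    ultimately have "((\<lambda>t. u (gam (t, z))) has_vector_derivative (?k * Gint u (t, z))) (at t)"
      unfolding has_vector_derivative_def by simp
    then show ?thesis by (rule has_vector_derivative_at_within)
  qed
  have "((\<lambda>t. ?k * Gint u (t, z)) has_integral (u (gam (1, z)) - u (gam (0, z)))) {0..1}"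
    by (rule fundamental_theorem_of_calculus) (use vd in auto)
  then have hi: "((\<lambda>t. ?k * Gint u (t, z)) has_integral u z) {0..1}"
    using g1 g0N u0 by simp
  have cG: "continuous_on {0..1} (\<lambda>t. Gint u (t, z))"
    by (rule continuous_on_compose2[OF smooth_continuous[OF smooth_Gint]]) (use z in \<open>auto intro!: continuous_intros\<close>)
  have "((\<lambda>t. Gint u (t, z)) has_integral integral {0..1} (\<lambda>t. Gint u (t, z))) {0..1}"
    using integrable_continuous_real[OF cG] by (simp add: integrable_integral)
  then have "((\<lambda>t. ?k * Gint u (t, z)) has_integral ?k * integral {0..1} (\<lambda>t. Gint u (t, z))) {0..1}"
    by (rule has_integral_mult_right)
  from has_integral_unique[OF hi this] show ?thesis .
qed

lemma div_aux: "(a::real) \<noteq> 0 \<Longrightarrow> c \<noteq> 0 \<Longrightarrow> d \<noteq> 0 \<Longrightarrow> c * inverse a * I / (c * d) = inverse (a * d) * I"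
  by (simp add: field_simps)

lemma hdiv_Iu: "z \<in> Bset \<Longrightarrow> hdiv u z = Iu u z"
proof -
  assume z: "z \<in> Bset"
  show "hdiv u z = Iu u z"
  proof (cases "Lform z = 0")
    case True then show ?thesis by (simp add: hdiv_def)
  next
    case False
    have rp: "0 < rho0 z" "0 < rho1 z" using rho_pos[OF z] by auto
    have d1: "rho0 z - rho1 z \<noteq> 0" using False unfolding Lform_rho by simp
    have d2: "rho0 z + rho1 z \<noteq> 0" using rp by simp
    have "hdiv u z = u z / Lform z" using False by (simp add: hdiv_def power2_eq_square field_simps)
    also have "\<dots> = Iu u z"
      unfolding ftc[OF z] Lform_rho Iu_def using rp d1 d2
      by (intro div_aux) auto
    finally show ?thesis .
  qed
qed

lemma division: "smooth_on (- {0}) (hdiv u) \<and> (\<forall>z. z \<noteq> 0 \<longrightarrow> u z = Lform z * hdiv u z)"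
proof
  have cL: "continuous_on (- {0}) (Lform :: 'n pt \<Rightarrow> real)"
    using smooth_continuous[OF smooth_Lform[OF nonzero_open]] .
  show "smooth_on (- {0}) (hdiv u)"
  proof (rule smooth_on_local[OF nonzero_open])
    fix x :: "'n pt" assume x: "x \<in> - {0}"
    show "\<exists>T. open T \<and> x \<in> T \<and> smooth_on T (hdiv u)"
    proof (cases "Lform x = 0")
      case True
      then have "x \<in> nullcone" using x by (simp add: nullcone_def)
      then have xB: "x \<in> Bset" using nullcone_B by blast
      have "smooth_on Bset (hdiv u)"
        by (rule smooth_on_cong[OF smooth_Iu]) (simp add: hdiv_Iu)
      then show ?thesis using xB open_Bset by blast
    next
      case False
      let ?A = "- {0} \<inter> Lform -` (- {0}) :: 'n pt set"
      have oA: "open ?A" using continuous_open_preimage[OF cL nonzero_open, of "- {0}"] by auto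
      have A0: "?A \<subseteq> - {0}" by blast
      have sL: "smooth_on ?A (Lform :: 'n pt \<Rightarrow> real)" by (rule smooth_Lform[OF oA])
      have sI: "smooth_on ?A (\<lambda>z. inverse ((Lform z)^2))"
        by (rule smooth_on_compose_pos[OF smooth_on_power[OF sL] _ smooth_on_inverse]) auto
      have "smooth_on ?A (hdiv u)"
        by (rule smooth_on_cong[OF smooth_on_mult[OF smooth_on_mult[OF smooth_on_subset[OF u oA A0] sL] sI]])
           (simp add: hdiv_def)
      then show ?thesis using oA x False by blast
    qed
  qed
  show "\<forall>z. z \<noteq> 0 \<longrightarrow> u z = Lform z * hdiv u z"
  proof (intro allI impI)
    fix z :: "'n pt" assume z: "z \<noteq> 0"
    show "u z = Lform z * hdiv u z"
    proof (cases "Lform z = 0")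
      case True
      then have "z \<in> nullcone" using z by (simp add: nullcone_def)
      then show ?thesis using u0 True by simp
    next
      case False
      then show ?thesis by (simp add: hdiv_def power2_eq_square field_simps)
    qed
  qed
qed

end

lemma Delta_cong:
  assumes S: "open S" and x: "x \<in> S" and eq: "\<And>y. y \<in> S \<Longrightarrow> u y = u' y"
  shows "Delta u x = Delta u' x"
proof -
  have "d2 v u x = d2 v u' x" for v
    unfolding d2_def by (rule dirderivs_cong[OF S eq x])
  then show ?thesis by (simp add: Delta_def)
qed

lemma uniq_step:
  fixes G h HH :: "'n::finite pt \<Rightarrow> real" and k :: nat
  assumes sG: "smooth_on (- {0}) G" and hG: "homog00 G"
    and sHH: "smooth_on (- {0}) HH"
    and DG: "\<And>z. z \<noteq> 0 \<Longrightarrow> Delta G z = Lform z ^ (CARD('n) - 1) * HH z"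
    and sh: "smooth_on (- {0}) h" and Gh: "\<And>z. z \<noteq> 0 \<Longrightarrow> G z = Lform z ^ k * h z"
    and k1: "1 \<le> k" and kn: "k < CARD('n)"
  shows "\<exists>h2. smooth_on (- {0}) h2 \<and> (\<forall>z. z \<noteq> 0 \<longrightarrow> G z = Lform z ^ Suc k * h2 z)"
proof -
  let ?n = "CARD('n)"
  have hh: "homk k h"
  proof (rule homk_extend[OF smooth_continuous[OF sh]])
    fix z :: "'n pt" and c :: complex assume z: "z \<noteq> 0" and L: "Lform z \<noteq> 0" and c: "c \<noteq> 0"
    have cz: "cscale c z \<noteq> 0" using cscale_zero_iff[OF c, of z] z by simp
    have "G (cscale c z) = G z" using hG z c unfolding homog00_def by blast
    then have "Lform (cscale c z) ^ k * h (cscale c z) = Lform z ^ k * h z"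
      using Gh[OF z] Gh[OF cz] by simp
    then have "Lform z ^ k * (((cmod c)^2)^k * h (cscale c z)) = Lform z ^ k * h z"
      by (simp add: Lform_cscale power_mult_distrib algebra_simps)
    then have "((cmod c)^2)^k * h (cscale c z) = h z" using L by simp
    then show "(cmod c)^(2*k) * h (cscale c z) = h z" by (simp add: power_mult)
  qed
  let ?q = "\<lambda>z. (Lform z ^ (?n - 1 - k) * HH z - Delta h z) * inverse (real k * (real ?n - real k))"
  have sq: "smooth_on (- {0}) ?q"
    by (intro smooth_on_mult smooth_on_diff smooth_on_power smooth_Lform nonzero_open sHH smooth_Delta sh
        smooth_on_const)
  have kk: "real k * (real ?n - real k) \<noteq> 0" using k1 kn by simp
  have eq: "h z = Lform z * ?q z" if z: "z \<noteq> 0" and L: "Lform z \<noteq> 0" for z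
  proof -
    have z': "z \<in> - {0}" using z by simp
    have eu: "D1 h z z = - 2 * real k * h z"
      by (rule euler[OF hh z smooth_on_diffble_at[OF sh z']])
    have "Delta G z = Delta (\<lambda>y. Lform y ^ k * h y) z"
      by (rule Delta_cong[OF nonzero_open z']) (simp add: Gh)
    also have "\<dots> = real k * (real ?n - real k) * Lform z ^ (k - 1) * h z + Lform z ^ k * Delta h z"
      by (rule Delta_Lk_e[OF sh z' k1 eu])
    finally have e1: "real k * (real ?n - real k) * Lform z ^ (k - 1) * h z
        = Lform z ^ (?n - 1) * HH z - Lform z ^ k * Delta h z"
      using DG[OF z] by simp
    have p1: "Lform z ^ (?n - 1) = Lform z ^ (k - 1) * (Lform z * Lform z ^ (?n - 1 - k))"
    proof -
      have "?n - 1 = (k - 1) + (1 + (?n - 1 - k))" using k1 kn by simp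
      then show ?thesis by (metis power_add power_one_right)
    qed
    have p2: "Lform z ^ k = Lform z ^ (k - 1) * Lform z"
    proof -
      have "k = (k - 1) + 1" using k1 by simp
      then show ?thesis by (metis power_add power_one_right)
    qed
    have "Lform z ^ (k - 1) * (real k * (real ?n - real k) * h z)
        = Lform z ^ (k - 1) * (Lform z * (Lform z ^ (?n - 1 - k) * HH z - Delta h z))"
      using e1 unfolding p1 p2 by (simp add: algebra_simps)
    then have "real k * (real ?n - real k) * h z = Lform z * (Lform z ^ (?n - 1 - k) * HH z - Delta h z)"
      using L by simp
    then show ?thesis using kk by (simp add: field_simps)
  qed
  have h0: "\<forall>z\<in>nullcone. h z = 0"
    using vanish_null[OF smooth_continuous[OF sh] smooth_continuous[OF sq] eq] by blast
  have dv: "smooth_on (- {0}) (hdiv h) \<and> (\<forall>z. z \<noteq> 0 \<longrightarrow> h z = Lform z * hdiv h z)"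
    by (rule division[OF sh h0])
  show ?thesis
  proof (intro exI conjI allI impI)
    show "smooth_on (- {0}) (hdiv h)" using dv by blast
    fix z :: "'n pt" assume z: "z \<noteq> 0"
    show "G z = Lform z ^ Suc k * hdiv h z"
      using Gh[OF z] dv z by simp
  qed
qed

lemma uniqueness:
  fixes f :: "'n::finite pt \<Rightarrow> real"
  assumes n2: "CARD('n) \<ge> 2" and F: "good_ext f F" and F': "good_ext f F'"
  shows "bigOL (CARD('n)) (\<lambda>z. F z - F' z)"
proof -
  let ?n = "CARD('n)"
  let ?G = "\<lambda>z. F z - F' z"
  obtain H where H: "smooth_on (- {0}) H" "\<And>z. z \<noteq> 0 \<Longrightarrow> Delta F z = Lform z ^ (?n - 1) * H z"
    using F unfolding good_ext_def bigOL_def by blast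
  obtain H' where H': "smooth_on (- {0}) H'" "\<And>z. z \<noteq> 0 \<Longrightarrow> Delta F' z = Lform z ^ (?n - 1) * H' z"
    using F' unfolding good_ext_def bigOL_def by blast
  have sF: "smooth_on (- {0}) F" and sF': "smooth_on (- {0}) F'"
    using F F' by (auto simp: good_ext_def)
  have sG: "smooth_on (- {0}) ?G" by (rule smooth_on_diff[OF sF sF'])
  have hG: "homog00 ?G" using F F' by (simp add: good_ext_def homog00_def)
  have G0: "\<forall>z\<in>nullcone. ?G z = 0" using F F' by (simp add: good_ext_def)
  let ?HH = "\<lambda>z. H z - H' z"
  have sHH: "smooth_on (- {0}) ?HH" by (rule smooth_on_diff[OF H(1) H'(1)])
  have DG: "Delta ?G z = Lform z ^ (?n - 1) * ?HH z" if z: "z \<noteq> 0" for z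
  proof -
    have "Delta (\<lambda>z. F z - 1 * F' z) z = Delta F z - 1 * Delta F' z"
      by (rule Delta_lin[OF sF sF']) (use z in simp)
    then show ?thesis using H(2)[OF z] H'(2)[OF z] by (simp add: algebra_simps)
  qed
  have main: "k \<le> ?n \<Longrightarrow> 1 \<le> k \<Longrightarrow> \<exists>h. smooth_on (- {0}) h \<and> (\<forall>z. z \<noteq> 0 \<longrightarrow> ?G z = Lform z ^ k * h z)" for k
  proof (induction k)
    case 0 then show ?case by simp
  next
    case (Suc k)
    show ?case
    proof (cases "k = 0")
      case True
      have "smooth_on (- {0}) (hdiv ?G) \<and> (\<forall>z. z \<noteq> 0 \<longrightarrow> ?G z = Lform z * hdiv ?G z)"
        by (rule division[OF sG G0])
      then show ?thesis using True by auto
    next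
      case False
      then obtain h where h: "smooth_on (- {0}) h" "\<forall>z. z \<noteq> 0 \<longrightarrow> ?G z = Lform z ^ k * h z"
        using Suc by auto
      show ?thesis
        by (rule uniq_step[OF sG hG sHH DG h(1)]) (use h(2) False Suc.prems in auto)
    qed
  qed
  show ?thesis
    unfolding bigOL_def using main[of ?n] n2 by auto
qed

theorem mainTheorem3:
  fixes f :: "complex \<times> (complex ^ 'n::finite) \<Rightarrow> real"
  assumes "CARD('n) \<ge> 2" and "f \<in> Espace"
  shows "(\<exists>F. good_ext f F) \<and>
         (\<forall>F F'. good_ext f F \<and> good_ext f F' \<longrightarrow> bigOL (CARD('n)) (\<lambda>z. F z - F' z))"
  using existence[OF assms] uniqueness[OF assms(1)] by blast

end
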